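(* Let $d\in\mathbb{N}$, $K=\mathbb{N}_0^d$ or $K=\mathbb{Z}^d$, $(\Omega,\mathcal F,P)$ a probability space with a $d$-parameter semigroup (group if $K=\mathbb{Z}^d$) $(\theta_k)_{k\in K}$ of $P$-preserving transformations, $(M,\mathcal B,\mu)$ a probability space, $\tau$ a $\mu$-preserving transformation of $M$ that is periodic with period $q\in\mathbb{N}$ (i.e. $\tau^q=\mathrm{Id}$), $\kappa:M\to K$ measurable and $\kappa_n=\sum_{i=0}^{n-1}\kappa\circ\tau^i$. Let $F\in L^1(M\times\Omega,\mathcal B\otimes\mathcal F,\mu\otimes P)$ and, for $t\in M$, let $\mathcal J_t$ be the $\sigma$-algebra of $\theta_{\kappa_q(t)}$-invariant sets in $\mathcal F$. Then for $\mu$-almost all $t\in M$, $$\frac1n\sum_{i=0}^{n-1}F\big(\tau^i(t),\theta_{\kappa_i(t)}\omega\big)\to\frac1q\sum_{\nu=0}^{q-1}E\big[F\big(\tau^\nu(t),\theta_{\kappa_\nu(t)}(\cdot)\big)\,\big|\,\mathcal J_t\big](\omega)\quad(n\to\infty)$$ for $P$-almost all $\omega\in\Omega$ and in $L^1(P)$. If moreover $\theta_{\kappa_q(t)}$ is ergodic with respect to $P$ for $\mu$-almost all $t\in M$, then the limit equals the constant $\frac1q\sum_{\nu=0}^{q-1}E\big[F(\tau^\nu(t),\cdot)\big]$.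
   Context: A semigroup of measure-preserving transformations: each $\theta_k$ measurable and $P$-preserving, $\theta_0=\mathrm{Id}$, $\theta_k\circ\theta_l=\theta_{k+l}$ (and $\theta_{-k}=\theta_k^{-1}$ in the group case). $E$ denotes expectation with respect to $P$. *)

theory Defs
  imports "HOL-Probability.Probability"
begin

definition invariant_sets :: "'a measure \<Rightarrow> ('a \<Rightarrow> 'a) \<Rightarrow> 'a set set" where
  "invariant_sets P T = {A \<in> sets P. T -` A \<inter> space P = A}"

text \<open>The sigma-algebra of T-invariant sets (as a measurable space on space P;
  only its sets matter for conditional expectation).\<close>
definition invariant_sigma :: "'a measure \<Rightarrow> ('a \<Rightarrow> 'a) \<Rightarrow> 'a measure" where
  "invariant_sigma P T = sigma (space P) (invariant_sets P T)"

definition ergodic :: "'a measure \<Rightarrow> ('a \<Rightarrow> 'a) \<Rightarrow> bool" where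
  "ergodic P T \<longleftrightarrow> (\<forall>A \<in> invariant_sets P T. measure P A = 0 \<or> measure P A = 1)"

definition meas_preserving :: "'a measure \<Rightarrow> ('a \<Rightarrow> 'a) \<Rightarrow> bool" where
  "meas_preserving P T \<longleftrightarrow> T \<in> P \<rightarrow>\<^sub>M P \<and> distr P P T = P"

end

theory Submission
  imports Defs
begin




definition bsum :: "('a \<Rightarrow> 'a) \<Rightarrow> ('a \<Rightarrow> real) \<Rightarrow> nat \<Rightarrow> 'a \<Rightarrow> real" where
  "bsum T f n x = (\<Sum>i<n. f ((T ^^ i) x))"

definition bavg :: "('a \<Rightarrow> 'a) \<Rightarrow> ('a \<Rightarrow> real) \<Rightarrow> nat \<Rightarrow> 'a \<Rightarrow> real" where
  "bavg T f n x = bsum T f n x / real n"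

fun bmax :: "('a \<Rightarrow> 'a) \<Rightarrow> ('a \<Rightarrow> real) \<Rightarrow> nat \<Rightarrow> 'a \<Rightarrow> real" where
  "bmax T f 0 x = 0"
| "bmax T f (Suc n) x = max (bmax T f n x) (bsum T f (Suc n) x)"

lemma bsum_0[simp]: "bsum T f 0 x = 0" by (simp add: bsum_def)

lemma bsum_Suc_shift: "bsum T f (Suc k) x = f x + bsum T f k (T x)"
  unfolding bsum_def sum.lessThan_Suc_shift by (simp add: funpow_Suc_right del: funpow.simps)

lemma bmax_nonneg: "0 \<le> bmax T f n x"
  by (induction n) auto

lemma bmax_ge: "k \<le> n \<Longrightarrow> bsum T f k x \<le> bmax T f n x"
proof (induction n)
  case 0 then show ?case by simp
next
  case (Suc n)
  then show ?case by (cases "k = Suc n") (auto simp: le_Suc_eq)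
qed

lemma bmax_cases: "bmax T f n x = 0 \<or> (\<exists>k\<in>{1..n}. bmax T f n x = bsum T f k x)"
proof (induction n)
  case 0 then show ?case by simp
next
  case (Suc n)
  then show ?case by (auto simp: max_def)
qed

lemma bsum_abs_le: "k \<le> n \<Longrightarrow> bsum T f k x \<le> (\<Sum>i<n. \<bar>f ((T ^^ i) x)\<bar>)"
proof -
  assume "k \<le> n"
  have "bsum T f k x \<le> (\<Sum>i<k. \<bar>f ((T ^^ i) x)\<bar>)" unfolding bsum_def by (intro sum_mono) auto
  also have "\<dots> \<le> (\<Sum>i<n. \<bar>f ((T ^^ i) x)\<bar>)" using \<open>k \<le> n\<close> by (intro sum_mono2) auto
  finally show ?thesis .
qed

lemma bmax_bound: "bmax T f n x \<le> (\<Sum>i<n. \<bar>f ((T ^^ i) x)\<bar>)"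
  using bmax_cases[of T f n x] bsum_abs_le[of _ n T f x]
  by (auto intro: sum_nonneg)

lemma bmax_key: "0 < bmax T f n x \<Longrightarrow> bmax T f n x \<le> f x + bmax T f n (T x)"
proof -
  assume pos: "0 < bmax T f n x"
  then obtain k where k: "k \<in> {1..n}" "bmax T f n x = bsum T f k x" using bmax_cases[of T f n x] by auto
  then obtain k' where k': "k = Suc k'" by (cases k) auto
  have "bsum T f k x = f x + bsum T f k' (T x)" using k' bsum_Suc_shift by simp
  also have "\<dots> \<le> f x + bmax T f n (T x)" using k k' bmax_ge[of k' n] by auto
  finally show ?thesis using k by simp
qed

lemma bmax_point: "bmax T f n x - bmax T f n (T x) \<le> (if 0 < bmax T f n x then f x else 0)"
  using bmax_key[of T f n x] bmax_nonneg[of T f n "T x"] bmax_nonneg[of T f n x] by auto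

locale mpt = prob_space P for P :: "'a measure" +
  fixes T :: "'a \<Rightarrow> 'a"
  assumes T_meas[measurable]: "T \<in> P \<rightarrow>\<^sub>M P" and T_distr: "distr P P T = P"
begin

lemma Tn_meas[measurable]: "(T ^^ n) \<in> P \<rightarrow>\<^sub>M P"
  by (induction n) (auto simp: measurable_ident)

lemma Tn_distr: "distr P P (T ^^ n) = P"
proof (induction n)
  case 0 then show ?case by (simp add: distr_id2 sets.sets_into_space)
next
  case (Suc n)
  have "distr P P (T ^^ Suc n) = distr (distr P P (T ^^ n)) P T"
    by (simp add: distr_distr comp_def)
  also have "\<dots> = P" using Suc T_distr by simp
  finally show ?case .
qed

lemma Tn_space: "x \<in> space P \<Longrightarrow> (T ^^ n) x \<in> space P"
  using measurable_space[OF Tn_meas] .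

lemma int_Tn:
  fixes f :: "'a \<Rightarrow> real"
  assumes "integrable P f"
  shows "integrable P (\<lambda>x. f ((T ^^ n) x))" "(\<integral>x. f ((T ^^ n) x) \<partial>P) = (\<integral>x. f x \<partial>P)"
proof -
  have [measurable]: "f \<in> borel_measurable P" using assms by auto
  have "integrable (distr P P (T ^^ n)) f" using assms Tn_distr by simp
  then show "integrable P (\<lambda>x. f ((T ^^ n) x))" using integrable_distr_eq[of "T ^^ n" P P f] by simp
  have "(\<integral>x. f x \<partial>distr P P (T^^n)) = (\<integral>x. f ((T ^^ n) x) \<partial>P)"
    by (rule integral_distr) auto
  then show "(\<integral>x. f ((T ^^ n) x) \<partial>P) = (\<integral>x. f x \<partial>P)" using Tn_distr by simp
qed

lemma int_T:
  fixes f :: "'a \<Rightarrow> real"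
  assumes "integrable P f"
  shows "integrable P (\<lambda>x. f (T x))" "(\<integral>x. f (T x) \<partial>P) = (\<integral>x. f x \<partial>P)"
  using int_Tn[OF assms, of 1] by auto

lemma bsum_meas[measurable]: assumes [measurable]: "f \<in> borel_measurable P" shows "bsum T f n \<in> borel_measurable P"
  unfolding bsum_def by measurable

lemma bavg_meas[measurable]: assumes [measurable]: "f \<in> borel_measurable P" shows "bavg T f n \<in> borel_measurable P"
  unfolding bavg_def by measurable

lemma bmax_meas[measurable]: assumes [measurable]: "f \<in> borel_measurable P" shows "bmax T f n \<in> borel_measurable P"
  by (induction n) auto

lemma bsum_int: "integrable P f \<Longrightarrow> integrable P (bsum T f n)"
  unfolding bsum_def by (auto intro!: Bochner_Integration.integrable_sum int_Tn(1))

lemma bavg_int: "integrable P f \<Longrightarrow> integrable P (bavg T f n)"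
  unfolding bavg_def by (intro integrable_divide bsum_int)

lemma maximal_n:
  assumes f: "integrable P f"
  shows "0 \<le> (\<integral>x. (if 0 < bmax T f n x then f x else 0) \<partial>P)"
proof -
  have [measurable]: "f \<in> borel_measurable P" using f by auto
  have ib: "integrable P (\<lambda>x. \<Sum>i<n. \<bar>f ((T ^^ i) x)\<bar>)"
    by (auto intro!: Bochner_Integration.integrable_sum integrable_abs int_Tn(1) f)
  have iM: "integrable P (bmax T f n)"
    by (rule Bochner_Integration.integrable_bound[OF ib])
       (auto simp: bmax_nonneg bmax_bound intro!: order_trans[OF _ abs_ge_self])
  have iI: "integrable P (\<lambda>x. if 0 < bmax T f n x then f x else 0)"
    by (rule Bochner_Integration.integrable_bound[OF integrable_abs[OF f]]) auto
  have "0 = (\<integral>x. bmax T f n x \<partial>P) - (\<integral>x. bmax T f n (T x) \<partial>P)"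
    using int_T(2)[OF iM] by simp
  also have "\<dots> = (\<integral>x. bmax T f n x - bmax T f n (T x) \<partial>P)"
    using iM int_T(1)[OF iM] by simp
  also have "\<dots> \<le> (\<integral>x. (if 0 < bmax T f n x then f x else 0) \<partial>P)"
    by (intro integral_mono iI Bochner_Integration.integrable_diff iM int_T(1)[OF iM] bmax_point)
  finally show ?thesis .
qed

lemma maximal:
  assumes f: "integrable P f"
  shows "0 \<le> (\<integral>x. (if \<exists>k\<ge>1. 0 < bsum T f k x then f x else 0) \<partial>P)"
proof -
  have [measurable]: "f \<in> borel_measurable P" using f by auto
  have ev: "\<forall>\<^sub>F n in sequentially. (if 0 < bmax T f n x then f x else 0)
            = (if \<exists>k\<ge>1. 0 < bsum T f k x then f x else 0)" for x
  proof (cases "\<exists>k\<ge>1. 0 < bsum T f k x")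
    case True
    then obtain k where "k \<ge> 1" "0 < bsum T f k x" by auto
    then have "\<forall>n\<ge>k. 0 < bmax T f n x" using bmax_ge[of k _ T f x] by fastforce
    then show ?thesis using True by (auto simp: eventually_sequentially)
  next
    case False
    then have "\<not> 0 < bmax T f n x" for n using bmax_cases[of T f n x] by auto
    then show ?thesis using False by auto
  qed
  have "(\<lambda>n. \<integral>x. (if 0 < bmax T f n x then f x else 0) \<partial>P)
      \<longlonglongrightarrow> (\<integral>x. (if \<exists>k\<ge>1. 0 < bsum T f k x then f x else 0) \<partial>P)"
  proof (rule integral_dominated_convergence[where w="\<lambda>x. \<bar>f x\<bar>"])
    show "AE x in P. (\<lambda>n. if 0 < bmax T f n x then f x else 0)
        \<longlonglongrightarrow> (if \<exists>k\<ge>1. 0 < bsum T f k x then f x else 0)"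
      by (intro AE_I2 tendsto_eventually ev)
  qed (use f in auto)
  then show ?thesis
    by (rule LIMSEQ_le_const) (use maximal_n[OF f] in auto)
qed

end



definition hi :: "(nat \<Rightarrow> real) \<Rightarrow> real \<Rightarrow> bool" where
  "hi X b \<longleftrightarrow> (\<exists>j::nat. \<forall>N. \<exists>n\<ge>N. b + 1 / real (Suc j) < X n)"

lemma bsum_neg: "bsum T (\<lambda>x. - f x) n x = - bsum T f n x"
  by (simp add: bsum_def sum_negf)

lemma bavg_neg: "bavg T (\<lambda>x. - f x) n x = - bavg T f n x"
  by (simp add: bavg_def bsum_neg)

lemma bsum_minus_const: "bsum T (\<lambda>x. f x - b) n x = bsum T f n x - real n * b"
  by (simp add: bsum_def sum_subtractf)

lemma hi_imp: "hi (\<lambda>n. bavg T f n x) b \<Longrightarrow> \<exists>k\<ge>1. real k * b < bsum T f k x"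
proof -
  assume "hi (\<lambda>n. bavg T f n x) b"
  then obtain j where "\<forall>N. \<exists>n\<ge>N. b + 1 / real (Suc j) < bavg T f n x" unfolding hi_def by auto
  then obtain n where n: "n \<ge> 1" "b + 1 / real (Suc j) < bavg T f n x" by auto
  have "b < bavg T f n x" using n(2) by (smt (verit) divide_pos_pos of_nat_0_less_iff zero_less_Suc)
  then have "real n * b < bsum T f n x" using n(1) by (simp add: bavg_def field_simps)
  then show ?thesis using n(1) by auto
qed

lemma bavg_T: "bavg T f n (T x) = (real (Suc n) / real n) * bavg T f (Suc n) x - f x / real n"
proof (cases "n = 0")
  case True then show ?thesis by (simp add: bavg_def)
next
  case False
  have c: "(real (Suc n) / real n) * (bsum T f (Suc n) x / real (Suc n)) = bsum T f (Suc n) x / real n"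
    by (simp del: of_nat_Suc)
  show ?thesis
    unfolding bavg_def c by (simp add: bsum_Suc_shift add_divide_distrib)
qed

lemma hi_T:
  assumes "hi (\<lambda>n. bavg T f n x) b"
  shows "hi (\<lambda>n. bavg T f n (T x)) b"
proof -
  obtain j where j: "\<forall>N. \<exists>n\<ge>N. b + 1 / real (Suc j) < bavg T f n x" using assms unfolding hi_def by auto
  define \<delta> where "\<delta> = 1 / real (Suc j)"
  have \<delta>: "\<delta> > 0" unfolding \<delta>_def by simp
  define c where "c = b + \<delta>"
  define N0 where "N0 = nat \<lceil>2 * \<bar>c - f x\<bar> / \<delta>\<rceil> + 1"
  have "\<forall>N. \<exists>n\<ge>N. b + 1 / real (Suc (2 * j + 1)) < bavg T f n (T x)"
  proof
    fix N
    obtain m where m: "m \<ge> Suc (max N N0)" "c < bavg T f m x" using j unfolding c_def \<delta>_def by blast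
    then obtain n where mn: "m = Suc n" by (cases m) auto
    have nN: "n \<ge> N" "n \<ge> N0" using m mn by auto
    have n1: "real n \<ge> 1" using nN(2) unfolding N0_def by simp
    have "real n \<ge> 2 * \<bar>c - f x\<bar> / \<delta>" using nN(2) unfolding N0_def by linarith
    then have "2 * \<bar>c - f x\<bar> \<le> real n * \<delta>" using \<delta> by (simp add: field_simps)
    then have e1: "\<bar>c - f x\<bar> / real n \<le> \<delta> / 2" using n1 by (simp add: field_simps)
    have "(real (Suc n) / real n) * c < (real (Suc n) / real n) * bavg T f (Suc n) x"
      using m mn n1 by (intro mult_strict_left_mono) auto
    then have "(real (Suc n) / real n) * c - f x / real n < bavg T f n (T x)"
      unfolding bavg_T by simp
    moreover have "(real (Suc n) / real n) * c - f x / real n = c + (c - f x) / real n"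
      using n1 by (simp add: field_simps)
    moreover have "(c - f x) / real n \<ge> - (\<bar>c - f x\<bar> / real n)"
      using n1 by (simp add: field_simps)
    moreover have "1 / real (Suc (2 * j + 1)) = \<delta> / 2" unfolding \<delta>_def by (simp add: field_simps)
    ultimately have "b + 1 / real (Suc (2 * j + 1)) < bavg T f n (T x)"
      using e1 unfolding c_def by linarith
    then show "\<exists>n\<ge>N. b + 1 / real (Suc (2 * j + 1)) < bavg T f n (T x)" using nN by auto
  qed
  then show ?thesis unfolding hi_def by blast
qed

lemma conv_core:
  fixes X :: "nat \<Rightarrow> real"
  assumes r: "strict_mono r" "(X \<circ> r) \<longlonglongrightarrow> l" and e: "\<epsilon> > 0"
    and fr: "\<forall>N. \<exists>n\<ge>N. l + \<epsilon> \<le> X n"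
    and H: "\<forall>a b::rat. a < b \<longrightarrow> \<not> (hi (\<lambda>n. - X n) (- of_rat a) \<and> hi X (of_rat b))"
  shows False
proof -
  define \<delta> where "\<delta> = \<epsilon> / 8"
  have d: "\<delta> > 0" using e unfolding \<delta>_def by simp
  obtain a' where a': "a' \<in> \<rat>" "l + 2*\<delta> < a'" "a' < l + 4*\<delta>" using Rats_dense_in_real[of "l+2*\<delta>" "l+4*\<delta>"] d by auto
  obtain b' where b': "b' \<in> \<rat>" "l + 4*\<delta> < b'" "b' < l + 6*\<delta>" using Rats_dense_in_real[of "l+4*\<delta>" "l+6*\<delta>"] d by auto
  obtain a where a: "a' = of_rat a" using a'(1) Rats_cases by blast
  obtain b where b: "b' = of_rat b" using b'(1) Rats_cases by blast
  have ab: "a < b" using a' b' a b by (metis less_trans of_rat_less)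
  obtain j where j: "inverse (real (Suc j)) < \<delta>" using reals_Archimedean[OF d] by blast
  have j': "1 / real (Suc j) < \<delta>" using j by (simp add: divide_inverse)
  have "hi X (of_rat b)"
    unfolding hi_def
  proof (rule exI[of _ j], rule allI)
    fix N
    obtain n where "n \<ge> N" "l + \<epsilon> \<le> X n" using fr by blast
    moreover have "of_rat b + 1 / real (Suc j) < l + \<epsilon>" using b b' j' unfolding \<delta>_def by linarith
    ultimately show "\<exists>n\<ge>N. of_rat b + 1 / real (Suc j) < X n" by force
  qed
  moreover have "hi (\<lambda>n. - X n) (- of_rat a)"
    unfolding hi_def
  proof (rule exI[of _ j], rule allI)
    fix N
    obtain K where K: "\<And>k. k \<ge> K \<Longrightarrow> dist ((X \<circ> r) k) l < \<delta>"
      using tendstoD[OF r(2) d] unfolding eventually_sequentially by blast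
    define k where "k = max N K"
    have "dist (X (r k)) l < \<delta>" using K[of k] unfolding k_def by simp
    then have "X (r k) < l + \<delta>" by (simp add: dist_real_def abs_less_iff)
    moreover have "r k \<ge> N" using seq_suble[OF r(1), of k] unfolding k_def by simp
    moreover have "l + \<delta> < of_rat a - 1 / real (Suc j)" using a a' j' by linarith
    ultimately show "\<exists>n\<ge>N. - of_rat a + 1 / real (Suc j) < - X n" by (intro exI[of _ "r k"]) auto
  qed
  ultimately show False using H ab by blast
qed

lemma conv_crit:
  fixes X :: "nat \<Rightarrow> real"
  assumes u: "\<not> (\<forall>m::nat. hi X (real m))" and d: "\<not> (\<forall>m::nat. hi (\<lambda>n. - X n) (real m))"
    and H: "\<forall>a b::rat. a < b \<longrightarrow> \<not> (hi (\<lambda>n. - X n) (- of_rat a) \<and> hi X (of_rat b))"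
  shows "convergent X"
proof -
  obtain m1 :: nat where "\<not> hi X (real m1)" using u by blast
  then have "\<not> (\<forall>N. \<exists>n\<ge>N. real m1 + 1 < X n)" unfolding hi_def by (metis div_by_1 of_nat_1_eq_iff One_nat_def)
  then obtain N1 where N1: "\<And>n. n \<ge> N1 \<Longrightarrow> X n \<le> real m1 + 1" by (meson not_less)
  obtain m2 :: nat where "\<not> hi (\<lambda>n. - X n) (real m2)" using d by blast
  then have "\<not> (\<forall>N. \<exists>n\<ge>N. real m2 + 1 < - X n)" unfolding hi_def by (metis div_by_1 of_nat_1_eq_iff One_nat_def)
  then obtain N2 where N2: "\<And>n. n \<ge> N2 \<Longrightarrow> - X n \<le> real m2 + 1" by (meson not_less)
  have "eventually (\<lambda>n. norm (X n) \<le> norm (real m1 + real m2 + 2)) sequentially"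
    unfolding eventually_sequentially using N1 N2
    by (intro exI[of _ "max N1 N2"]) (auto simp: abs_le_iff, smt (verit) of_nat_0_le_iff, smt (verit) of_nat_0_le_iff)
  then have "Bseq X" by (rule Bseq_eventually_mono) simp
  then have "bounded (range X)" by (simp add: Bseq_eq_bounded)
  then obtain l r where r: "strict_mono r" "(X \<circ> r) \<longlonglongrightarrow> l"
    using bounded_imp_convergent_subsequence by blast
  have "X \<longlonglongrightarrow> l"
  proof (rule ccontr)
    assume "\<not> X \<longlonglongrightarrow> l"
    then obtain \<epsilon> where e: "\<epsilon> > 0" "\<not> eventually (\<lambda>n. dist (X n) l < \<epsilon>) sequentially"
      unfolding tendsto_iff by blast
    then have "frequently (\<lambda>n. \<not> dist (X n) l < \<epsilon>) sequentially"
      by (simp add: not_eventually)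
    then have "frequently (\<lambda>n. l + \<epsilon> \<le> X n \<or> - l + \<epsilon> \<le> - X n) sequentially"
      by (rule frequently_elim1) (auto simp: dist_real_def)
    then have "frequently (\<lambda>n. l + \<epsilon> \<le> X n) sequentially \<or> frequently (\<lambda>n. - l + \<epsilon> \<le> - X n) sequentially"
      by (simp add: frequently_disj_iff)
    then show False
    proof
      assume "frequently (\<lambda>n. l + \<epsilon> \<le> X n) sequentially"
      then have "\<forall>N. \<exists>n\<ge>N. l + \<epsilon> \<le> X n" by (simp add: frequently_sequentially)
      then show False using conv_core[OF r e(1) _ H] by blast
    next
      assume "frequently (\<lambda>n. - l + \<epsilon> \<le> - X n) sequentially"
      then have fr: "\<forall>N. \<exists>n\<ge>N. - l + \<epsilon> \<le> - X n" by (simp add: frequently_sequentially)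
      have r': "((\<lambda>n. - X n) \<circ> r) \<longlonglongrightarrow> - l" using tendsto_minus[OF r(2)] by (simp add: comp_def)
      have H': "\<forall>a b::rat. a < b \<longrightarrow> \<not> (hi (\<lambda>n. - (- X n)) (- of_rat a) \<and> hi (\<lambda>n. - X n) (of_rat b))"
      proof (intro allI impI)
        fix a b :: rat assume "a < b"
        then have "- b < - a" by simp
        then show "\<not> (hi (\<lambda>n. - (- X n)) (- of_rat a) \<and> hi (\<lambda>n. - X n) (of_rat b))"
          using H[rule_format, of "-b" "-a"] by (auto simp: of_rat_minus)
      qed
      show False using conv_core[OF r(1) r' e(1) fr H'] .
    qed
  qed
  then show ?thesis by (auto simp: convergent_def)
qed




context mpt begin

lemma int_ind: "B \<in> sets P \<Longrightarrow> integrable P f \<Longrightarrow> integrable P (\<lambda>x. indicator B x * (f x::real))"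
  using integrable_mult_indicator[of B P f] by simp

lemma int_indic: "B \<in> sets P \<Longrightarrow> integrable P (indicator B :: _ \<Rightarrow> real)"
  by (simp add: integrable_indicator_iff sets.Int_space_eq2 less_top[symmetric])

lemma Tn_in_B:
  assumes "x \<in> B" "\<And>x. x \<in> B \<Longrightarrow> T x \<in> B"
  shows "(T ^^ i) x \<in> B"
  using assms by (induction i) auto

lemma maximal_inv:
  assumes f: "integrable P f" and B: "B \<in> sets P" and inv: "\<And>x. x \<in> B \<Longrightarrow> T x \<in> B"
    and pos: "\<And>x. x \<in> B \<Longrightarrow> \<exists>k\<ge>1. 0 < bsum T f k x"
  shows "0 \<le> (\<integral>x. indicator B x * f x \<partial>P)"
proof -
  define g where "g x = indicator B x * f x" for x
  have ig: "integrable P g" unfolding g_def by (rule int_ind[OF B f])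
  have "(\<integral>x. (if \<exists>k\<ge>1. 0 < bsum T g k x then g x else 0) \<partial>P) = (\<integral>x. g x \<partial>P)"
  proof (rule Bochner_Integration.integral_cong[OF refl])
    fix x assume "x \<in> space P"
    show "(if \<exists>k\<ge>1. 0 < bsum T g k x then g x else 0) = g x"
    proof (cases "x \<in> B")
      case True
      have "bsum T g k x = bsum T f k x" for k
        unfolding bsum_def g_def using Tn_in_B[OF True inv] by (intro sum.cong) auto
      then show ?thesis using pos[OF True] by auto
    next
      case False then show ?thesis by (simp add: g_def)
    qed
  qed
  then show ?thesis using maximal[OF ig] unfolding g_def by simp
qed

lemma avg_upper:
  assumes f: "integrable P f" and B: "B \<in> sets P" and inv: "\<And>x. x \<in> B \<Longrightarrow> T x \<in> B"
    and pos: "\<And>x. x \<in> B \<Longrightarrow> \<exists>k\<ge>1. real k * b < bsum T f k x"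
  shows "b * measure P B \<le> (\<integral>x. indicator B x * f x \<partial>P)"
proof -
  have "0 \<le> (\<integral>x. indicator B x * (f x - b) \<partial>P)"
    by (rule maximal_inv[OF _ B inv]) (use f pos in \<open>auto simp: bsum_minus_const\<close>)
  also have "(\<integral>x. indicator B x * (f x - b) \<partial>P) = (\<integral>x. indicator B x * f x \<partial>P) - (\<integral>x. b * indicator B x \<partial>P)"
    by (subst Bochner_Integration.integral_diff[symmetric])
       (auto intro!: int_ind[OF B f] integrable_real_mult_indicator[OF B f] int_indic[OF B] Bochner_Integration.integral_cong simp: B algebra_simps)
  also have "(\<integral>x. b * indicator B x \<partial>P) = b * measure P B"
    using B by (simp add: sets.Int_space_eq2)
  finally show ?thesis by simp
qed

lemma avg_lower:
  assumes f: "integrable P f" and B: "B \<in> sets P" and inv: "\<And>x. x \<in> B \<Longrightarrow> T x \<in> B"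
    and pos: "\<And>x. x \<in> B \<Longrightarrow> \<exists>k\<ge>1. bsum T f k x < real k * a"
  shows "(\<integral>x. indicator B x * f x \<partial>P) \<le> a * measure P B"
proof -
  have "(-a) * measure P B \<le> (\<integral>x. indicator B x * (- f x) \<partial>P)"
    by (rule avg_upper[OF _ B inv]) (use f pos in \<open>auto simp: bsum_neg\<close>)
  then show ?thesis by simp
qed

lemma less_bavg_meas: assumes [measurable]: "f \<in> borel_measurable P"
  shows "Measurable.pred P (\<lambda>x. c < bavg T f n x)"
  unfolding pred_def by (rule borel_measurable_less) (auto intro: bavg_meas)

lemma hi_meas:
  assumes [measurable]: "f \<in> borel_measurable P"
  shows "Measurable.pred P (\<lambda>x. hi (\<lambda>n. bavg T f n x) b)"
  unfolding hi_def by (intro pred_intros_countable pred_intros_logic measurable_const less_bavg_meas assms) simp_all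

lemma ae_osc:
  assumes f: "integrable P f" and ab: "a < b"
  shows "AE x in P. \<not> (hi (\<lambda>n. - bavg T f n x) (- a) \<and> hi (\<lambda>n. bavg T f n x) b)"
proof -
  have [measurable]: "f \<in> borel_measurable P" using f by auto
  define B where "B = {x \<in> space P. hi (\<lambda>n. bavg T (\<lambda>x. - f x) n x) (- a) \<and> hi (\<lambda>n. bavg T f n x) b}"
  have Bm: "B \<in> sets P" unfolding B_def
    by (intro predE pred_intros_logic hi_meas) (use f in auto)
  have inv: "T x \<in> B" if "x \<in> B" for x
    using that hi_T[of T "\<lambda>x. - f x" x "-a"] hi_T[of T f x b] measurable_space[OF T_meas, of x] unfolding B_def by auto
  have "b * measure P B \<le> (\<integral>x. indicator B x * f x \<partial>P)"
    by (rule avg_upper[OF f Bm inv]) (use hi_imp[of T f _ b] in \<open>auto simp: B_def\<close>)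
  moreover have "(\<integral>x. indicator B x * f x \<partial>P) \<le> a * measure P B"
  proof (rule avg_lower[OF f Bm inv])
    fix x assume "x \<in> B"
    then obtain k where "k \<ge> 1" "real k * (-a) < bsum T (\<lambda>x. - f x) k x"
      using hi_imp[of T "\<lambda>x. - f x" x "-a"] unfolding B_def by auto
    then show "\<exists>k\<ge>1. bsum T f k x < real k * a" by (auto simp: bsum_neg)
  qed
  ultimately have "(b - a) * measure P B \<le> 0" by (simp add: left_diff_distrib)
  then have "measure P B \<le> 0" using ab by (simp add: mult_le_0_iff)
  then have "measure P B = 0" using measure_nonneg[of P B] by linarith
  then have "emeasure P B = 0" by (simp add: emeasure_eq_measure)
  then have "AE x in P. x \<notin> B" using AE_iff_measurable[OF Bm, of "\<lambda>x. x \<notin> B"] Bm sets.sets_into_space by blast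
  then show ?thesis by (rule AE_mp[OF _ AE_I2]) (simp add: B_def bavg_neg)
qed

lemma ae_bdd:
  assumes f: "integrable P f"
  shows "AE x in P. \<not> (\<forall>m::nat. hi (\<lambda>n. bavg T f n x) (real m))"
proof -
  have [measurable]: "f \<in> borel_measurable P" using f by auto
  define B where "B = {x \<in> space P. \<forall>m::nat. hi (\<lambda>n. bavg T f n x) (real m)}"
  have Bm: "B \<in> sets P" unfolding B_def
    by (intro predE pred_intros_countable hi_meas) (use f in auto)
  have inv: "T x \<in> B" if "x \<in> B" for x
    using that hi_T[of T f x] measurable_space[OF T_meas, of x] unfolding B_def by simp
  have le: "real m * measure P B \<le> (\<integral>x. \<bar>f x\<bar> \<partial>P)" for m
  proof -
    have "real m * measure P B \<le> (\<integral>x. indicator B x * f x \<partial>P)"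
      by (rule avg_upper[OF f Bm inv]) (use hi_imp[of T f _ "real m"] in \<open>auto simp: B_def\<close>)
    also have "\<dots> \<le> (\<integral>x. \<bar>f x\<bar> \<partial>P)"
      by (intro integral_mono int_ind[OF Bm f] integrable_abs f)
         (auto simp: indicator_def)
    finally show ?thesis .
  qed
  have "measure P B = 0"
  proof (rule ccontr)
    assume "measure P B \<noteq> 0"
    then have pos: "measure P B > 0" using measure_nonneg[of P B] by linarith
    obtain m :: nat where "(\<integral>x. \<bar>f x\<bar> \<partial>P) / measure P B < real m" using reals_Archimedean2 by blast
    then have "(\<integral>x. \<bar>f x\<bar> \<partial>P) < real m * measure P B" using pos by (simp add: field_simps)
    then show False using le[of m] by linarith
  qed
  then have "emeasure P B = 0" by (simp add: emeasure_eq_measure)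
  then have "AE x in P. x \<notin> B" using AE_iff_measurable[OF Bm, of "\<lambda>x. x \<notin> B"] Bm sets.sets_into_space by blast
  then show ?thesis by (rule AE_mp[OF _ AE_I2]) (simp add: B_def)
qed

lemma ae_convergent:
  assumes f: "integrable P f"
  shows "AE x in P. convergent (\<lambda>n. bavg T f n x)"
proof -
  have f': "integrable P (\<lambda>x. - f x)" using f by simp
  have A1: "AE x in P. \<forall>a::rat. \<forall>b::rat. a < b \<longrightarrow>
      \<not> (hi (\<lambda>n. - bavg T f n x) (- of_rat a) \<and> hi (\<lambda>n. bavg T f n x) (of_rat b))"
    unfolding AE_all_countable
  proof (intro allI)
    fix a b :: rat
    show "AE x in P. a < b \<longrightarrow> \<not> (hi (\<lambda>n. - bavg T f n x) (- of_rat a) \<and> hi (\<lambda>n. bavg T f n x) (of_rat b))"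
    proof (cases "a < b")
      case True
      then have "of_rat a < (of_rat b :: real)" by (simp add: of_rat_less)
      from ae_osc[OF f this] show ?thesis by (rule AE_mp[OF _ AE_I2]) simp
    next
      case False then show ?thesis by simp
    qed
  qed
  have A2: "AE x in P. \<not> (\<forall>m::nat. hi (\<lambda>n. bavg T f n x) (real m))" by (rule ae_bdd[OF f])
  have A3: "AE x in P. \<not> (\<forall>m::nat. hi (\<lambda>n. - bavg T f n x) (real m))"
    using ae_bdd[OF f'] by (simp add: bavg_neg)
  from A1 A2 A3 show ?thesis
  proof (eventually_elim)
    case (elim x)
    show ?case by (rule conv_crit[OF elim(2) elim(3) elim(1)])
  qed
qed

end



definition blim :: "('a \<Rightarrow> 'a) \<Rightarrow> ('a \<Rightarrow> real) \<Rightarrow> 'a \<Rightarrow> real" where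
  "blim T f x = (if convergent (\<lambda>n. bavg T f n x) then lim (\<lambda>n. bavg T f n x) else 0)"

lemma blim_tendsto: "convergent (\<lambda>n. bavg T f n x) \<Longrightarrow> (\<lambda>n. bavg T f n x) \<longlonglongrightarrow> blim T f x"
  by (simp add: blim_def convergent_LIMSEQ_iff)

lemma bavg_T': "bavg T f (Suc n) x = (real n / real (Suc n)) * bavg T f n (T x) + f x / real (Suc n)"
proof -
  have c: "(real n / real (Suc n)) * (bsum T f n (T x) / real n) = bsum T f n (T x) / real (Suc n)"
    by (cases "n = 0") (simp_all del: of_nat_Suc)
  show ?thesis unfolding bavg_def c by (simp add: bsum_Suc_shift add_divide_distrib)
qed

lemma conv_T:
  assumes "(\<lambda>n. bavg T f n x) \<longlonglongrightarrow> l"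
  shows "(\<lambda>n. bavg T f n (T x)) \<longlonglongrightarrow> l"
proof -
  have "(\<lambda>n. (real (Suc n) / real n) * bavg T f (Suc n) x - f x / real n) \<longlonglongrightarrow> 1 * l - 0"
    by (intro tendsto_diff tendsto_mult LIMSEQ_Suc_n_over_n LIMSEQ_Suc[OF assms] lim_const_over_n)
  then show ?thesis unfolding bavg_T by simp
qed

lemma conv_T':
  assumes "(\<lambda>n. bavg T f n (T x)) \<longlonglongrightarrow> l"
  shows "(\<lambda>n. bavg T f n x) \<longlonglongrightarrow> l"
proof -
  have "(\<lambda>n. (real n / real (Suc n)) * bavg T f n (T x) + f x / real (Suc n)) \<longlonglongrightarrow> 1 * l + 0"
    by (intro tendsto_add tendsto_mult LIMSEQ_n_over_Suc_n assms LIMSEQ_Suc[OF lim_const_over_n])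
  then have "(\<lambda>n. bavg T f (Suc n) x) \<longlonglongrightarrow> l" unfolding bavg_T' by simp
  then show ?thesis by (rule LIMSEQ_imp_Suc)
qed

lemma blim_T: "blim T f (T x) = blim T f x"
proof (cases "convergent (\<lambda>n. bavg T f n x)")
  case True
  then have l: "(\<lambda>n. bavg T f n x) \<longlonglongrightarrow> blim T f x" by (rule blim_tendsto)
  then have l': "(\<lambda>n. bavg T f n (T x)) \<longlonglongrightarrow> blim T f x" by (rule conv_T)
  then have "convergent (\<lambda>n. bavg T f n (T x))" by (auto simp: convergent_def)
  then have "(\<lambda>n. bavg T f n (T x)) \<longlonglongrightarrow> blim T f (T x)" by (rule blim_tendsto)
  then show ?thesis using l' LIMSEQ_unique by blast
next
  case False
  have "\<not> convergent (\<lambda>n. bavg T f n (T x))"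
  proof
    assume "convergent (\<lambda>n. bavg T f n (T x))"
    then obtain l where "(\<lambda>n. bavg T f n (T x)) \<longlonglongrightarrow> l" by (auto simp: convergent_def)
    then have "(\<lambda>n. bavg T f n x) \<longlonglongrightarrow> l" by (rule conv_T')
    then show False using False by (auto simp: convergent_def)
  qed
  then show ?thesis using False by (simp add: blim_def)
qed

lemma bavg_diff: "bavg T (\<lambda>x. f x - g x) n x = bavg T f n x - bavg T g n x"
  by (simp add: bavg_def bsum_def sum_subtractf diff_divide_distrib)

lemma bavg_add: "bavg T (\<lambda>x. f x + g x) n x = bavg T f n x + bavg T g n x"
  by (simp add: bavg_def bsum_def sum.distrib add_divide_distrib)

lemma bavg_abs: "\<bar>bavg T f n x\<bar> \<le> bavg T (\<lambda>x. \<bar>f x\<bar>) n x"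
  unfolding bavg_def bsum_def by (simp add: divide_right_mono sum_abs abs_divide)

lemma bavg_bounded: "(\<And>x. \<bar>f x\<bar> \<le> C) \<Longrightarrow> 0 \<le> C \<Longrightarrow> \<bar>bavg T f n x\<bar> \<le> C"
proof -
  assume b: "\<And>x. \<bar>f x\<bar> \<le> C" and C: "0 \<le> C"
  have "\<bar>bsum T f n x\<bar> \<le> (\<Sum>i<n. C)" unfolding bsum_def
    by (rule order_trans[OF sum_abs]) (intro sum_mono b)
  then have "\<bar>bsum T f n x\<bar> \<le> real n * C" by simp
  then show ?thesis unfolding bavg_def using C
    by (cases "n = 0") (auto simp: abs_divide field_simps)
qed

lemma blim_bounded: "(\<And>x. \<bar>f x\<bar> \<le> C) \<Longrightarrow> 0 \<le> C \<Longrightarrow> \<bar>blim T f x\<bar> \<le> C"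
proof -
  assume b: "\<And>x. \<bar>f x\<bar> \<le> C" and C: "0 \<le> C"
  show ?thesis
  proof (cases "convergent (\<lambda>n. bavg T f n x)")
    case True
    then have "(\<lambda>n. \<bar>bavg T f n x\<bar>) \<longlonglongrightarrow> \<bar>blim T f x\<bar>" by (intro tendsto_rabs blim_tendsto)
    then show ?thesis by (rule LIMSEQ_le_const2) (intro exI[of _ 0] allI impI bavg_bounded[OF b C])
  qed (simp add: blim_def C)
qed

lemma fatou_real:
  fixes u :: "'a \<Rightarrow> real" and h :: "nat \<Rightarrow> 'a \<Rightarrow> real"
  assumes h: "\<And>n. integrable M (h n)" and u: "u \<in> borel_measurable M"
    and lim: "AE x in M. (\<lambda>n. h n x) \<longlonglongrightarrow> u x" and C: "\<And>n. (\<integral>x. \<bar>h n x\<bar> \<partial>M) \<le> C"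
  shows "integrable M u" "(\<integral>x. \<bar>u x\<bar> \<partial>M) \<le> C"
proof -
  have [measurable]: "h n \<in> borel_measurable M" for n using h by auto
  have [measurable]: "u \<in> borel_measurable M" by (rule u)
  have C0: "0 \<le> C" using C[of 0] by (smt (verit) integral_nonneg_AE abs_ge_zero AE_I2)
  have "(\<integral>\<^sup>+x. ennreal \<bar>u x\<bar> \<partial>M) = (\<integral>\<^sup>+x. liminf (\<lambda>n. ennreal \<bar>h n x\<bar>) \<partial>M)"
  proof (rule nn_integral_cong_AE)
    show "AE x in M. ennreal \<bar>u x\<bar> = liminf (\<lambda>n. ennreal \<bar>h n x\<bar>)"
      using lim
    proof eventually_elim
      case (elim x)
      then have "(\<lambda>n. ennreal \<bar>h n x\<bar>) \<longlonglongrightarrow> ennreal \<bar>u x\<bar>" by (intro tendsto_ennrealI tendsto_rabs)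
      then show ?case by (rule lim_imp_Liminf[symmetric, rotated]) simp
    qed
  qed
  also have "\<dots> \<le> liminf (\<lambda>n. \<integral>\<^sup>+x. ennreal \<bar>h n x\<bar> \<partial>M)"
    by (rule nn_integral_liminf) simp
  also have "\<dots> = liminf (\<lambda>n. ennreal (\<integral>x. \<bar>h n x\<bar> \<partial>M))"
    by (intro arg_cong[where f="\<lambda>X. liminf X"] ext nn_integral_eq_integral integrable_abs h) auto
  also have "\<dots> \<le> limsup (\<lambda>n. ennreal (\<integral>x. \<bar>h n x\<bar> \<partial>M))"
    by (rule Liminf_le_Limsup) simp
  also have "\<dots> \<le> ennreal C"
    by (rule Limsup_bounded) (intro always_eventually allI ennreal_leI C)
  finally have le: "(\<integral>\<^sup>+x. ennreal \<bar>u x\<bar> \<partial>M) \<le> ennreal C" .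
  then show iu: "integrable M u"
    unfolding integrable_iff_bounded using u by (auto simp: less_top[symmetric] top_unique)
  have "ennreal (\<integral>x. \<bar>u x\<bar> \<partial>M) = (\<integral>\<^sup>+x. ennreal \<bar>u x\<bar> \<partial>M)"
    by (rule nn_integral_eq_integral[symmetric]) (use iu in auto)
  then have "ennreal (\<integral>x. \<bar>u x\<bar> \<partial>M) \<le> ennreal C" using le by simp
  then show "(\<integral>x. \<bar>u x\<bar> \<partial>M) \<le> C" using ennreal_le_iff[OF C0] by blast
qed

context mpt begin

lemma blim_meas[measurable]:
  assumes [measurable]: "f \<in> borel_measurable P"
  shows "blim T f \<in> borel_measurable P"
proof -
  have "{x \<in> space P. convergent (\<lambda>n. bavg T f n x)} = {x \<in> space P. Cauchy (\<lambda>n. bavg T f n x)}"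
    by (simp add: Cauchy_convergent_iff)
  also have "\<dots> \<in> sets P" by (intro sets_Collect_Cauchy bavg_meas assms)
  finally show ?thesis
  unfolding blim_def
  by (rule measurable_If[rotated 2]) (auto intro!: borel_measurable_lim_metric bavg_meas)
qed

lemma bavg_integral: "integrable P g \<Longrightarrow> n \<ge> 1 \<Longrightarrow> (\<integral>x. bavg T g n x \<partial>P) = (\<integral>x. g x \<partial>P)"
  unfolding bavg_def bsum_def
  by (simp add: Bochner_Integration.integral_sum int_Tn)

lemma bavg_L1: "integrable P h \<Longrightarrow> (\<integral>x. \<bar>bavg T h n x\<bar> \<partial>P) \<le> (\<integral>x. \<bar>h x\<bar> \<partial>P)"
proof (cases "n = 0")
  case True
  then show ?thesis by (simp add: bavg_def)
next
  case False
  assume h: "integrable P h"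
  have "(\<integral>x. \<bar>bavg T h n x\<bar> \<partial>P) \<le> (\<integral>x. bavg T (\<lambda>x. \<bar>h x\<bar>) n x \<partial>P)"
    by (intro integral_mono integrable_abs bavg_int h bavg_abs)
  also have "\<dots> = (\<integral>x. \<bar>h x\<bar> \<partial>P)" using False by (intro bavg_integral integrable_abs h) auto
  finally show ?thesis .
qed

lemma ae_blim: "integrable P f \<Longrightarrow> AE x in P. (\<lambda>n. bavg T f n x) \<longlonglongrightarrow> blim T f x"
  by (rule AE_mp[OF ae_convergent AE_I2]) (auto intro: blim_tendsto)

lemma blim_int: "integrable P f \<Longrightarrow> integrable P (blim T f)"
  by (rule fatou_real(1)[OF bavg_int _ ae_blim bavg_L1]) auto

end



context mpt begin

lemma blim_L1:
  assumes f: "integrable P f"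
  shows "(\<lambda>n. \<integral>x. \<bar>bavg T f n x - blim T f x\<bar> \<partial>P) \<longlonglongrightarrow> 0"
proof -
  have [measurable]: "f \<in> borel_measurable P" using f by auto
  define ft where "ft k x = max (- real k) (min (real k) (f x))" for k x
  have ft_meas[measurable]: "ft k \<in> borel_measurable P" for k unfolding ft_def by measurable
  have ft_b: "\<bar>ft k x\<bar> \<le> real k" for k x unfolding ft_def by auto
  have ft_int: "integrable P (ft k)" for k
    by (rule Bochner_Integration.integrable_bound[of P "\<lambda>_. real k"]) (auto intro!: ft_b)
  have d_int: "integrable P (\<lambda>x. f x - ft k x)" for k using f ft_int by auto
  have trunc: "(\<lambda>k. \<integral>x. \<bar>f x - ft k x\<bar> \<partial>P) \<longlonglongrightarrow> (\<integral>x. 0 \<partial>P)"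
  proof (rule integral_dominated_convergence[where w="\<lambda>x. \<bar>f x\<bar>"])
    show "AE x in P. (\<lambda>k. \<bar>f x - ft k x\<bar>) \<longlonglongrightarrow> 0"
    proof (rule AE_I2, rule tendsto_eventually)
      fix x
      show "\<forall>\<^sub>F k in sequentially. \<bar>f x - ft k x\<bar> = 0"
        unfolding eventually_sequentially
      proof (rule exI[of _ "nat \<lceil>\<bar>f x\<bar>\<rceil>"], intro allI impI)
        fix n assume "nat \<lceil>\<bar>f x\<bar>\<rceil> \<le> n"
        then have "real (nat \<lceil>\<bar>f x\<bar>\<rceil>) \<le> real n" by (simp only: of_nat_le_iff)
        moreover have "\<bar>f x\<bar> \<le> real (nat \<lceil>\<bar>f x\<bar>\<rceil>)" by linarith
        ultimately have "\<bar>f x\<bar> \<le> real n" by linarith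
        then show "\<bar>f x - ft n x\<bar> = 0" unfolding ft_def by auto
      qed
    qed
    show "AE x in P. norm \<bar>f x - ft k x\<bar> \<le> \<bar>f x\<bar>" for k
      by (rule AE_I2) (auto simp: ft_def)
  qed (use f in auto)
  then have trunc: "(\<lambda>k. \<integral>x. \<bar>f x - ft k x\<bar> \<partial>P) \<longlonglongrightarrow> 0" by simp
  have bdd: "(\<lambda>n. \<integral>x. \<bar>bavg T (ft k) n x - blim T (ft k) x\<bar> \<partial>P) \<longlonglongrightarrow> (\<integral>x. 0 \<partial>P)" for k
  proof (rule integral_dominated_convergence[where w="\<lambda>x. 2 * real k"])
    show "AE x in P. (\<lambda>n. \<bar>bavg T (ft k) n x - blim T (ft k) x\<bar>) \<longlonglongrightarrow> 0"
      using ae_blim[OF ft_int[of k]]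
    proof eventually_elim
      case (elim x)
      have "(\<lambda>n. \<bar>bavg T (ft k) n x - blim T (ft k) x\<bar>) \<longlonglongrightarrow> \<bar>blim T (ft k) x - blim T (ft k) x\<bar>"
        by (intro tendsto_rabs tendsto_diff elim tendsto_const)
      then show ?case by simp
    qed
    show "AE x in P. norm \<bar>bavg T (ft k) n x - blim T (ft k) x\<bar> \<le> 2 * real k" for n
    proof (rule AE_I2)
      fix x
      have "\<bar>bavg T (ft k) n x\<bar> \<le> real k" by (rule bavg_bounded[OF ft_b]) simp
      moreover have "\<bar>blim T (ft k) x\<bar> \<le> real k" by (rule blim_bounded[OF ft_b]) simp
      ultimately show "norm \<bar>bavg T (ft k) n x - blim T (ft k) x\<bar> \<le> 2 * real k" by simp
    qed
  qed auto
  then have bdd: "(\<lambda>n. \<integral>x. \<bar>bavg T (ft k) n x - blim T (ft k) x\<bar> \<partial>P) \<longlonglongrightarrow> 0" for k by simp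
  have key: "(\<integral>x. \<bar>bavg T f n x - blim T f x\<bar> \<partial>P)
      \<le> 2 * (\<integral>x. \<bar>f x - ft k x\<bar> \<partial>P) + (\<integral>x. \<bar>bavg T (ft k) n x - blim T (ft k) x\<bar> \<partial>P)" for k n
  proof -
    have i1: "integrable P (\<lambda>x. \<bar>bavg T (\<lambda>x. f x - ft k x) n x\<bar>)" by (intro integrable_abs bavg_int d_int)
    have i2: "integrable P (\<lambda>x. \<bar>bavg T (ft k) n x - blim T (ft k) x\<bar>)"
      by (intro integrable_abs Bochner_Integration.integrable_diff bavg_int blim_int ft_int)
    have i3: "integrable P (\<lambda>x. \<bar>blim T (ft k) x - blim T f x\<bar>)"
      by (intro integrable_abs Bochner_Integration.integrable_diff blim_int ft_int f)
    have i0: "integrable P (\<lambda>x. \<bar>bavg T f n x - blim T f x\<bar>)"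
      by (intro integrable_abs Bochner_Integration.integrable_diff bavg_int blim_int f)
    have "(\<integral>x. \<bar>bavg T f n x - blim T f x\<bar> \<partial>P) \<le>
      (\<integral>x. \<bar>bavg T (\<lambda>x. f x - ft k x) n x\<bar> + \<bar>bavg T (ft k) n x - blim T (ft k) x\<bar> + \<bar>blim T (ft k) x - blim T f x\<bar> \<partial>P)"
    proof (rule integral_mono)
      show "integrable P (\<lambda>x. \<bar>bavg T (\<lambda>x. f x - ft k x) n x\<bar> + \<bar>bavg T (ft k) n x - blim T (ft k) x\<bar> + \<bar>blim T (ft k) x - blim T f x\<bar>)"
        using i1 i2 i3 by auto
      fix x
      show "\<bar>bavg T f n x - blim T f x\<bar> \<le> \<bar>bavg T (\<lambda>x. f x - ft k x) n x\<bar> + \<bar>bavg T (ft k) n x - blim T (ft k) x\<bar> + \<bar>blim T (ft k) x - blim T f x\<bar>"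
        unfolding bavg_diff by linarith
    qed (rule i0)
    also have "\<dots> = (\<integral>x. \<bar>bavg T (\<lambda>x. f x - ft k x) n x\<bar> \<partial>P) + (\<integral>x. \<bar>bavg T (ft k) n x - blim T (ft k) x\<bar> \<partial>P)
        + (\<integral>x. \<bar>blim T (ft k) x - blim T f x\<bar> \<partial>P)"
      using i1 i2 i3 by simp
    also have "(\<integral>x. \<bar>bavg T (\<lambda>x. f x - ft k x) n x\<bar> \<partial>P) \<le> (\<integral>x. \<bar>f x - ft k x\<bar> \<partial>P)"
      by (rule bavg_L1[OF d_int])
    also have "(\<integral>x. \<bar>blim T (ft k) x - blim T f x\<bar> \<partial>P) \<le> (\<integral>x. \<bar>f x - ft k x\<bar> \<partial>P)"
    proof -
      have "AE x in P. (\<lambda>n. bavg T (\<lambda>x. f x - ft k x) n x) \<longlonglongrightarrow> blim T f x - blim T (ft k) x"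
        using ae_blim[OF f] ae_blim[OF ft_int[of k]]
        by eventually_elim (unfold bavg_diff, intro tendsto_diff)
      from fatou_real(2)[OF bavg_int[OF d_int] _ this bavg_L1[OF d_int]]
      have "(\<integral>x. \<bar>blim T f x - blim T (ft k) x\<bar> \<partial>P) \<le> (\<integral>x. \<bar>f x - ft k x\<bar> \<partial>P)"
        using f ft_int by auto
      then show ?thesis by (simp add: abs_minus_commute)
    qed
    finally show ?thesis by simp
  qed
  show ?thesis
  proof (rule LIMSEQ_I)
    fix r :: real assume r: "0 < r"
    obtain k where k: "norm ((\<integral>x. \<bar>f x - ft k x\<bar> \<partial>P) - 0) < r / 3"
      using LIMSEQ_D[OF trunc, of "r/3"] r by auto
    obtain no where no: "\<And>n. n \<ge> no \<Longrightarrow> norm ((\<integral>x. \<bar>bavg T (ft k) n x - blim T (ft k) x\<bar> \<partial>P) - 0) < r / 3"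
      using LIMSEQ_D[OF bdd[of k], of "r/3"] r by auto
    have "norm ((\<integral>x. \<bar>bavg T f n x - blim T f x\<bar> \<partial>P) - 0) < r" if "n \<ge> no" for n
    proof -
      have "0 \<le> (\<integral>x. \<bar>bavg T f n x - blim T f x\<bar> \<partial>P)" by simp
      then show ?thesis using key[of n k] k no[OF that] by simp
    qed
    then show "\<exists>no. \<forall>n\<ge>no. norm ((\<integral>x. \<bar>bavg T f n x - blim T f x\<bar> \<partial>P) - 0) < r" by blast
  qed
qed

end



context mpt begin

lemma inv_sub: "invariant_sets P T \<subseteq> Pow (space P)"
  unfolding invariant_sets_def using sets.sets_into_space by auto

lemma inv_sets_eq: "sets (invariant_sigma P T) = sigma_sets (space P) (invariant_sets P T)"
  unfolding invariant_sigma_def using inv_sub by simp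

lemma inv_space: "space (invariant_sigma P T) = space P"
  unfolding invariant_sigma_def using inv_sub by simp

lemma inv_sets_charact:
  assumes "A \<in> sets (invariant_sigma P T)"
  shows "A \<in> sets P \<and> T -` A \<inter> space P = A"
  using assms unfolding inv_sets_eq
proof (induction rule: sigma_sets.induct)
  case (Basic a) then show ?case unfolding invariant_sets_def by auto
next
  case Empty then show ?case by auto
next
  case (Compl a)
  have "T -` (space P - a) \<inter> space P = space P - (T -` a \<inter> space P)"
    using measurable_space[OF T_meas] by auto
  then show ?case using Compl by auto
next
  case (Union a)
  have "T -` (\<Union>i. a i) \<inter> space P = (\<Union>i. T -` a i \<inter> space P)" by auto
  also have "\<dots> = (\<Union>i. a i)" using Union by auto
  finally show ?case using Union by auto
qed

lemma inv_subalg: "subalgebra P (invariant_sigma P T)"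
  unfolding subalgebra_def using inv_space inv_sets_charact by auto

lemma blim_inv_meas:
  assumes [measurable]: "f \<in> borel_measurable P"
  shows "blim T f \<in> borel_measurable (invariant_sigma P T)"
proof (rule measurableI)
  fix A :: "real set" assume A: "A \<in> sets borel"
  define S where "S = blim T f -` A \<inter> space P"
  have S: "S \<in> sets P" unfolding S_def using A by (rule measurable_sets[OF blim_meas[OF assms]])
  have "T -` S \<inter> space P = S" unfolding S_def using measurable_space[OF T_meas] blim_T[of T f] by auto
  then have "S \<in> invariant_sets P T" using S unfolding invariant_sets_def by auto
  then show "blim T f -` A \<inter> space (invariant_sigma P T) \<in> sets (invariant_sigma P T)"
    unfolding inv_space inv_sets_eq S_def[symmetric] by auto
qed auto

lemma inv_Tn:
  assumes "A \<in> sets (invariant_sigma P T)" "x \<in> space P"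
  shows "(T ^^ i) x \<in> A \<longleftrightarrow> x \<in> A"
  using assms(2)
proof (induction i arbitrary: x)
  case 0 then show ?case by simp
next
  case (Suc i)
  have "(T ^^ Suc i) x = (T ^^ i) (T x)" by (simp add: funpow_Suc_right del: funpow.simps)
  moreover have "T x \<in> space P" using Suc measurable_space[OF T_meas] by auto
  moreover have "T x \<in> A \<longleftrightarrow> x \<in> A" using inv_sets_charact[OF assms(1)] Suc.prems by blast
  ultimately show ?case using Suc.IH by simp
qed

lemma inv_bavg_integral:
  assumes A: "A \<in> sets (invariant_sigma P T)" and g: "integrable P g" and n: "n \<ge> 1"
  shows "(\<integral>x. indicator A x * bavg T g n x \<partial>P) = (\<integral>x. indicator A x * g x \<partial>P)"
proof -
  have AP: "A \<in> sets P" using inv_sets_charact[OF A] by auto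
  have "(\<integral>x. indicator A x * bavg T g n x \<partial>P) = (\<integral>x. bavg T (\<lambda>y. indicator A y * g y) n x \<partial>P)"
  proof (rule Bochner_Integration.integral_cong[OF refl])
    fix x assume x: "x \<in> space P"
    have "indicator A ((T ^^ i) x) = (indicator A x :: real)" for i
      using inv_Tn[OF A x, of i] by (simp add: indicator_def)
    then show "indicator A x * bavg T g n x = bavg T (\<lambda>y. indicator A y * g y) n x"
      unfolding bavg_def bsum_def by (simp add: sum_distrib_left)
  qed
  also have "\<dots> = (\<integral>x. indicator A x * g x \<partial>P)" by (rule bavg_integral[OF int_ind[OF AP g] n])
  finally show ?thesis .
qed

lemma birk_cond:
  assumes f: "integrable P f"
  shows "AE x in P. real_cond_exp P (invariant_sigma P T) f x = blim T f x"
proof -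
  have [measurable]: "f \<in> borel_measurable P" using f by auto
  have "finite_measure_subalgebra P (invariant_sigma P T)"
    unfolding finite_measure_subalgebra_def finite_measure_subalgebra_axioms_def
    using inv_subalg finite_measure_axioms by auto
  then interpret S: sigma_finite_subalgebra P "invariant_sigma P T"
    by (rule finite_measure_subalgebra_is_sigma_finite)
  show ?thesis
  proof (rule S.real_cond_exp_charact)
    fix A assume A: "A \<in> sets (invariant_sigma P T)"
    have AP: "A \<in> sets P" using inv_sets_charact[OF A] by auto
    define d where "d = (\<integral>x. indicator A x * blim T f x \<partial>P) - (\<integral>x. indicator A x * f x \<partial>P)"
    have le: "\<bar>d\<bar> \<le> (\<integral>x. \<bar>bavg T f n x - blim T f x\<bar> \<partial>P)" if n: "n \<ge> 1" for n
    proof -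
      have "d = (\<integral>x. indicator A x * blim T f x \<partial>P) - (\<integral>x. indicator A x * bavg T f n x \<partial>P)"
        unfolding d_def inv_bavg_integral[OF A f n] ..
      also have "\<dots> = (\<integral>x. indicator A x * (blim T f x - bavg T f n x) \<partial>P)"
        by (simp add: right_diff_distrib int_ind[OF AP] blim_int[OF f] bavg_int[OF f])
      finally have "\<bar>d\<bar> = \<bar>\<integral>x. indicator A x * (blim T f x - bavg T f n x) \<partial>P\<bar>" by simp
      also have "\<dots> \<le> (\<integral>x. \<bar>indicator A x * (blim T f x - bavg T f n x)\<bar> \<partial>P)" by (rule integral_abs_bound)
      also have "\<dots> \<le> (\<integral>x. \<bar>bavg T f n x - blim T f x\<bar> \<partial>P)"
        by (intro integral_mono integrable_abs int_ind[OF AP] Bochner_Integration.integrable_diff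
            blim_int[OF f] bavg_int[OF f]) (auto simp: indicator_def)
      finally show ?thesis .
    qed
    have "\<bar>d\<bar> \<le> 0"
      by (rule LIMSEQ_le_const[OF blim_L1[OF f]]) (use le in auto)
    then show "(\<integral>x\<in>A. f x \<partial>P) = (\<integral>x\<in>A. blim T f x \<partial>P)"
      unfolding set_lebesgue_integral_def d_def by simp
  qed (use f blim_int[OF f] blim_inv_meas in auto)
qed

theorem birkhoff:
  assumes f: "integrable P f"
  shows "AE x in P. (\<lambda>n. bavg T f n x) \<longlonglongrightarrow> real_cond_exp P (invariant_sigma P T) f x"
    and "(\<lambda>n. \<integral>x. \<bar>bavg T f n x - real_cond_exp P (invariant_sigma P T) f x\<bar> \<partial>P) \<longlonglongrightarrow> 0"
proof -
  show "AE x in P. (\<lambda>n. bavg T f n x) \<longlonglongrightarrow> real_cond_exp P (invariant_sigma P T) f x"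
    using ae_blim[OF f] birk_cond[OF f] by eventually_elim simp
  have "(\<integral>x. \<bar>bavg T f n x - real_cond_exp P (invariant_sigma P T) f x\<bar> \<partial>P)
      = (\<integral>x. \<bar>bavg T f n x - blim T f x\<bar> \<partial>P)" for n
  proof (rule integral_cong_AE)
    show "AE x in P. \<bar>bavg T f n x - real_cond_exp P (invariant_sigma P T) f x\<bar> = \<bar>bavg T f n x - blim T f x\<bar>"
      using birk_cond[OF f] by eventually_elim simp
  qed (use f blim_int[OF f] in auto)
  then show "(\<lambda>n. \<integral>x. \<bar>bavg T f n x - real_cond_exp P (invariant_sigma P T) f x\<bar> \<partial>P) \<longlonglongrightarrow> 0"
    using blim_L1[OF f] by simp
qed

end



lemma mpt_of_mp: "prob_space P \<Longrightarrow> meas_preserving P T \<Longrightarrow> mpt P T"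
  by (simp add: mpt_def mpt_axioms_def meas_preserving_def)

lemma AE_map_mp:
  assumes g: "g \<in> M \<rightarrow>\<^sub>M M" and d: "distr M M g = M" and ae: "AE t in M. Q t"
  shows "AE t in M. Q (g t)"
proof -
  from ae obtain N where N: "{x \<in> space M. \<not> Q x} \<subseteq> N" "emeasure M N = 0" "N \<in> sets M"
    by (rule AE_E)
  show ?thesis
  proof (rule AE_I)
    show "{x \<in> space M. \<not> Q (g x)} \<subseteq> g -` N \<inter> space M" using N(1) measurable_space[OF g] by auto
    have "emeasure M (g -` N \<inter> space M) = emeasure (distr M M g) N"
      by (rule emeasure_distr[symmetric, OF g N(3)])
    then show "emeasure M (g -` N \<inter> space M) = 0" using d N(2) by simp
    show "g -` N \<inter> space M \<in> sets M" using measurable_sets[OF g N(3)] .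
  qed
qed

lemma sum_lessThan_add_nat: fixes a b :: nat shows "(\<Sum>i<a+b. h i) = (\<Sum>i<a. h i) + (\<Sum>i<b. h (a+i))"
  by (induction b) (simp_all add: add_ac)

lemma sum_blocks: fixes q m :: nat shows "(\<Sum>i<q*m. h i) = (\<Sum>j<m. \<Sum>\<nu><q. h (q*j+\<nu>))"
proof (induction m)
  case 0 then show ?case by simp
next
  case (Suc m)
  have "(\<Sum>i<q*Suc m. h i) = (\<Sum>i<q*m + q. h i)" by (simp add: add.commute)
  also have "\<dots> = (\<Sum>i<q*m. h i) + (\<Sum>\<nu><q. h (q*m+\<nu>))" by (rule sum_lessThan_add_nat)
  finally show ?case using Suc by simp
qed

lemma sum_blocks_rem:
  fixes q n :: nat
  assumes "q \<ge> 1"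
  shows "(\<Sum>i<n. h i) = (\<Sum>j<n div q. \<Sum>\<nu><q. h (q*j+\<nu>)) + (\<Sum>\<nu><n mod q. h (q*(n div q)+\<nu>))"
proof -
  have "n = q*(n div q) + n mod q" by (metis mult_div_mod_eq)
  then have "(\<Sum>i<n. h i) = (\<Sum>i<q*(n div q) + n mod q. h i)" by simp
  also have "\<dots> = (\<Sum>i<q*(n div q). h i) + (\<Sum>\<nu><n mod q. h (q*(n div q)+\<nu>))" by (rule sum_lessThan_add_nat)
  finally show ?thesis by (simp add: sum_blocks)
qed

lemma filterlim_div_nat: "q \<ge> 1 \<Longrightarrow> filterlim (\<lambda>n::nat. n div q) sequentially sequentially"
  unfolding filterlim_at_top eventually_sequentially
proof (intro allI exI[of _ "_ * q"] impI)
  fix Z n :: nat assume "q \<ge> 1" "Z * q \<le> n"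
  then have "Z * q div q \<le> n div q" by (intro div_le_mono) simp
  then show "Z \<le> n div q" using \<open>q \<ge> 1\<close> by simp
qed

lemma ratio_div_nat:
  assumes q: "q \<ge> 1"
  shows "(\<lambda>n::nat. real (n div q) / real n) \<longlonglongrightarrow> 1 / real q"
proof (rule tendsto_sandwich[where f="\<lambda>n. 1 / real q - 1 / real n" and h="\<lambda>n. 1 / real q"])
  have "real (n div q) / real n \<le> 1 / real q" if n: "n \<ge> 1" for n
  proof -
    have "real (n div q) * real q \<le> real n"
      by (metis of_nat_le_iff of_nat_mult div_times_less_eq_dividend)
    then show ?thesis using n q by (simp add: field_simps)
  qed
  then show "\<forall>\<^sub>F n in sequentially. real (n div q) / real n \<le> 1 / real q"
    unfolding eventually_sequentially by blast
  have "1 / real q - 1 / real n \<le> real (n div q) / real n" if n: "n \<ge> 1" for n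
  proof -
    have "n = q * (n div q) + n mod q" by (metis mult_div_mod_eq)
    then have "real n = real q * real (n div q) + real (n mod q)" by (metis of_nat_add of_nat_mult)
    moreover have "real (n mod q) \<le> real q" using q by (simp add: less_imp_le)
    ultimately have "real n - real q \<le> real q * real (n div q)" by linarith
    then have "(real n - real q) / real q \<le> real (n div q)"
      using q by (simp add: pos_divide_le_eq mult.commute)
    then have "((real n - real q) / real q) / real n \<le> real (n div q) / real n"
      by (rule divide_right_mono) simp
    moreover have "((real n - real q) / real q) / real n = 1 / real q - 1 / real n"
      using n q by (simp add: field_simps)
    ultimately show ?thesis by simp
  qed
  then show "\<forall>\<^sub>F n in sequentially. 1 / real q - 1 / real n \<le> real (n div q) / real n"
    unfolding eventually_sequentially by blast
  show "(\<lambda>n. 1 / real q - 1 / real n) \<longlonglongrightarrow> 1 / real q"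
    using tendsto_diff[OF tendsto_const[of "1 / real q"] lim_const_over_n[of 1]] by simp
qed simp

lemma conv_block:
  fixes X Y R :: "nat \<Rightarrow> real"
  assumes q: "q \<ge> 1" and X: "X \<longlonglongrightarrow> c" and Y: "(\<lambda>m. Y m / real (Suc m)) \<longlonglongrightarrow> 0"
    and R: "\<And>n. \<bar>R n\<bar> \<le> Y (n div q)"
  shows "(\<lambda>n. (real (n div q) / real n) * X (n div q) + R n / real n) \<longlonglongrightarrow> c / real q"
proof -
  have fl: "filterlim (\<lambda>n::nat. n div q) sequentially sequentially" by (rule filterlim_div_nat[OF q])
  have X': "(\<lambda>n. X (n div q)) \<longlonglongrightarrow> c" by (rule filterlim_compose[OF X fl])
  have Y': "(\<lambda>n. 2 * (Y (n div q) / real (Suc (n div q)))) \<longlonglongrightarrow> 2 * 0"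
    by (intro tendsto_mult tendsto_const filterlim_compose[OF Y fl])
  have R': "(\<lambda>n. R n / real n) \<longlonglongrightarrow> 0"
  proof (rule Lim_null_comparison[OF _ Y'[unfolded mult_zero_right]])
    have "norm (R n / real n) \<le> 2 * (Y (n div q) / real (Suc (n div q)))" if n: "n \<ge> 1" for n
    proof -
      have Y0: "0 \<le> Y (n div q)" using R[of n] by linarith
      have "real (Suc (n div q)) \<le> 2 * real n"
      proof -
        have "n div q \<le> n" by simp
        then show ?thesis using n by linarith
      qed
      then have "2 * Y (n div q) / (2 * real n) \<le> 2 * Y (n div q) / real (Suc (n div q))"
        using Y0 n by (intro divide_left_mono) auto
      then have "Y (n div q) / real n \<le> 2 * (Y (n div q) / real (Suc (n div q)))"
        by simp
      moreover have "norm (R n / real n) \<le> Y (n div q) / real n"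
        using R[of n] n by (simp add: abs_divide divide_right_mono)
      ultimately show ?thesis by linarith
    qed
    then show "\<forall>\<^sub>F n in sequentially. norm (R n / real n) \<le> 2 * (Y (n div q) / real (Suc (n div q)))"
      unfolding eventually_sequentially by blast
  qed
  have "(\<lambda>n. (real (n div q) / real n) * X (n div q) + R n / real n) \<longlonglongrightarrow> (1 / real q) * c + 0"
    by (intro tendsto_add tendsto_mult ratio_div_nat q X' R')
  then show ?thesis by simp
qed

lemma last_term_conv:
  assumes "convergent (\<lambda>n. bavg T G n x)"
  shows "(\<lambda>m. G ((T ^^ m) x) / real (Suc m)) \<longlonglongrightarrow> 0"
proof -
  obtain l where l: "(\<lambda>n. bavg T G n x) \<longlonglongrightarrow> l" using assms by (auto simp: convergent_def)
  have eq: "G ((T ^^ m) x) / real (Suc m) = bavg T G (Suc m) x - (real m / real (Suc m)) * bavg T G m x" for m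
  proof -
    have "bsum T G (Suc m) x = bsum T G m x + G ((T ^^ m) x)" by (simp add: bsum_def)
    moreover have "(real m / real (Suc m)) * (bsum T G m x / real m) = bsum T G m x / real (Suc m)"
      by (cases "m = 0") (simp_all del: of_nat_Suc)
    ultimately show ?thesis unfolding bavg_def by (simp add: add_divide_distrib)
  qed
  have "(\<lambda>m. bavg T G (Suc m) x - (real m / real (Suc m)) * bavg T G m x) \<longlonglongrightarrow> l - 1 * l"
    by (intro tendsto_diff tendsto_mult LIMSEQ_Suc[OF l] LIMSEQ_n_over_Suc_n l)
  then show ?thesis unfolding eq by simp
qed

lemma (in sigma_finite_subalgebra) real_cond_exp_sum_nat:
  fixes n :: nat
  assumes "\<And>i. i < n \<Longrightarrow> integrable M (f i)"
  shows "AE x in M. real_cond_exp M F (\<lambda>x. \<Sum>i<n. f i x) x = (\<Sum>i<n. real_cond_exp M F (f i) x)"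
  using assms
proof (induction n)
  case 0
  have "AE x in M. real_cond_exp M F (\<lambda>x. 0) x = 0"
    by (rule real_cond_exp_F_meas) auto
  then show ?case by simp
next
  case (Suc n)
  have i: "integrable M (\<lambda>x. \<Sum>i<n. f i x)" using Suc.prems by auto
  have a1: "AE x in M. real_cond_exp M F (\<lambda>x. (\<Sum>i<n. f i x) + f n x) x
        = real_cond_exp M F (\<lambda>x. \<Sum>i<n. f i x) x + real_cond_exp M F (f n) x"
    by (rule real_cond_exp_add[OF i]) (use Suc.prems in auto)
  have a2: "AE x in M. real_cond_exp M F (\<lambda>x. \<Sum>i<n. f i x) x = (\<Sum>i<n. real_cond_exp M F (f i) x)"
    using Suc.IH Suc.prems by auto
  from a1 a2 show ?case by eventually_elim simp
qed

context mpt begin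

lemma sfs: "sigma_finite_subalgebra P (invariant_sigma P T)"
proof -
  have "finite_measure_subalgebra P (invariant_sigma P T)"
    unfolding finite_measure_subalgebra_def finite_measure_subalgebra_axioms_def
    using inv_subalg finite_measure_axioms by auto
  then show ?thesis by (rule finite_measure_subalgebra_is_sigma_finite)
qed

lemma cond_exp_ergodic:
  assumes erg: "ergodic P T" and f: "integrable P f"
  shows "AE x in P. real_cond_exp P (invariant_sigma P T) f x = (\<integral>y. f y \<partial>P)"
proof -
  interpret S: sigma_finite_subalgebra P "invariant_sigma P T" by (rule sfs)
  have [measurable]: "f \<in> borel_measurable P" using f by auto
  show ?thesis
  proof (rule S.real_cond_exp_charact)
    fix A assume A: "A \<in> sets (invariant_sigma P T)"
    have Ai: "A \<in> invariant_sets P T" using inv_sets_charact[OF A] unfolding invariant_sets_def by auto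
    have AP[measurable]: "A \<in> sets P" using Ai unfolding invariant_sets_def by auto
    have "measure P A = 0 \<or> measure P A = 1" using erg Ai unfolding ergodic_def by auto
    then show "(\<integral>x\<in>A. f x \<partial>P) = (\<integral>x\<in>A. (\<integral>y. f y \<partial>P) \<partial>P)"
    proof
      assume m0: "measure P A = 0"
      then have "A \<in> null_sets P" using AP by (simp add: null_sets_def emeasure_eq_measure)
      then have ae: "AE x in P. x \<notin> A" by (rule AE_not_in)
      have "(\<integral>x\<in>A. f x \<partial>P) = (\<integral>x. 0 \<partial>P)"
        unfolding set_lebesgue_integral_def
        apply (rule integral_cong_AE)
          apply (measurable; fail)
         apply (measurable; fail)
        using ae by auto
      moreover have "(\<integral>x\<in>A. (\<integral>y. f y \<partial>P) \<partial>P) = (\<integral>x. 0 \<partial>P)"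
        unfolding set_lebesgue_integral_def
        apply (rule integral_cong_AE)
          apply (measurable; fail)
         apply (measurable; fail)
        using ae by auto
      ultimately show ?thesis by simp
    next
      assume m1: "measure P A = 1"
      then have ae: "AE x in P. x \<in> A" by (rule AE_prob_1)
      have "(\<integral>x\<in>A. f x \<partial>P) = (\<integral>x. f x \<partial>P)"
        unfolding set_lebesgue_integral_def
        apply (rule integral_cong_AE)
          apply (measurable; fail)
         apply (measurable; fail)
        using ae by auto
      moreover have "(\<integral>x\<in>A. (\<integral>y. f y \<partial>P) \<partial>P) = (\<integral>x. (\<integral>y. f y \<partial>P) \<partial>P)"
        unfolding set_lebesgue_integral_def
        apply (rule integral_cong_AE)
          apply (measurable; fail)
         apply (measurable; fail)
        using ae by (rule AE_mp[OF _ AE_I2]) (auto simp: indicator_def)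
      ultimately show ?thesis by (simp add: prob_space)
    qed
  qed (use f in auto)
qed

end



definition kap :: "('m \<Rightarrow> 'k::comm_monoid_add) \<Rightarrow> ('m \<Rightarrow> 'm) \<Rightarrow> nat \<Rightarrow> 'm \<Rightarrow> 'k" where
  "kap \<kappa> \<tau> n t = (\<Sum>i<n. \<kappa> ((\<tau> ^^ i) t))"

lemma kap_add: "kap \<kappa> \<tau> (a + b) t = kap \<kappa> \<tau> a t + kap \<kappa> \<tau> b ((\<tau> ^^ a) t)"
proof -
  have "kap \<kappa> \<tau> (a + b) t = kap \<kappa> \<tau> a t + (\<Sum>i<b. \<kappa> ((\<tau> ^^ (a + i)) t))"
    unfolding kap_def by (rule sum_lessThan_add_nat)
  moreover have "(\<tau> ^^ (a + i)) t = (\<tau> ^^ i) ((\<tau> ^^ a) t)" for i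
    by (metis funpow_add add.commute comp_apply)
  ultimately show ?thesis unfolding kap_def by simp
qed

lemma kap_in:
  assumes "0 \<in> K" "\<And>k l. k \<in> K \<Longrightarrow> l \<in> K \<Longrightarrow> k + l \<in> K" "\<And>i. \<kappa> ((\<tau> ^^ i) t) \<in> K"
  shows "kap \<kappa> \<tau> n t \<in> K"
  using assms by (induction n) (auto simp: kap_def)

lemma abs3: "\<bar>a + b + c\<bar> \<le> \<bar>a\<bar> + \<bar>b\<bar> + \<bar>(c::real)\<bar>"
  by arith

lemma bsum_eq_mult: "bsum T f m x = real m * bavg T f m x"
  by (cases "m = 0") (simp_all add: bavg_def)

lemma per_t:
  fixes P :: "'w measure" and K :: "'k::comm_monoid_add set" and \<theta> :: "'k \<Rightarrow> 'w \<Rightarrow> 'w"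
    and \<tau> :: "'m \<Rightarrow> 'm" and q :: nat and \<kappa> :: "'m \<Rightarrow> 'k" and F :: "'m \<times> 'w \<Rightarrow> real" and t :: 'm
  assumes K0: "0 \<in> K" and Kadd: "\<And>k l. k \<in> K \<Longrightarrow> l \<in> K \<Longrightarrow> k + l \<in> K"
    and P: "prob_space P"
    and \<theta>_mp: "\<And>k. k \<in> K \<Longrightarrow> meas_preserving P (\<theta> k)"
    and \<theta>_add: "\<And>k l \<omega>. k \<in> K \<Longrightarrow> l \<in> K \<Longrightarrow> \<omega> \<in> space P \<Longrightarrow> \<theta> k (\<theta> l \<omega>) = \<theta> (k + l) \<omega>"
    and q: "q \<ge> 1" and per: "(\<tau> ^^ q) t = t"
    and \<kappa>K: "\<And>i. \<kappa> ((\<tau> ^^ i) t) \<in> K"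
    and Fint: "\<And>\<nu>. \<nu> < q \<Longrightarrow> integrable P (\<lambda>\<omega>. F ((\<tau> ^^ \<nu>) t, \<omega>))"
  defines "Lx \<equiv> (\<lambda>\<omega>. (1 / real q) * (\<Sum>\<nu><q. real_cond_exp P (invariant_sigma P (\<theta> (kap \<kappa> \<tau> q t)))
                 (\<lambda>\<omega>'. F ((\<tau> ^^ \<nu>) t, \<theta> (kap \<kappa> \<tau> \<nu> t) \<omega>')) \<omega>))"
  defines "Ax \<equiv> (\<lambda>n \<omega>. (1 / real n) * (\<Sum>i<n. F ((\<tau> ^^ i) t, \<theta> (kap \<kappa> \<tau> i t) \<omega>)))"
  shows "(AE \<omega> in P. (\<lambda>n. Ax n \<omega>) \<longlonglongrightarrow> Lx \<omega>)
       \<and> (\<lambda>n. \<integral>\<^sup>+ \<omega>. ennreal \<bar>Ax n \<omega> - Lx \<omega>\<bar> \<partial>P) \<longlonglongrightarrow> 0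
       \<and> (ergodic P (\<theta> (kap \<kappa> \<tau> q t)) \<longrightarrow>
          (AE \<omega> in P. Lx \<omega> = (1 / real q) * (\<Sum>\<nu><q. \<integral> \<omega>'. F ((\<tau> ^^ \<nu>) t, \<omega>') \<partial>P)))"
proof -
  interpret PP: prob_space P by (rule P)
  have kK: "kap \<kappa> \<tau> n t \<in> K" for n by (rule kap_in[of K \<kappa> \<tau> t, OF K0 Kadd \<kappa>K])
  have \<theta>mpt: "k \<in> K \<Longrightarrow> mpt P (\<theta> k)" for k by (rule mpt_of_mp[OF P \<theta>_mp])
  define Tt where "Tt = \<theta> (kap \<kappa> \<tau> q t)"
  interpret TT: mpt P Tt unfolding Tt_def by (rule \<theta>mpt[OF kK])
  interpret S: sigma_finite_subalgebra P "invariant_sigma P Tt" by (rule TT.sfs)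
  define f where "f = (\<lambda>\<nu> \<omega>. F ((\<tau> ^^ \<nu>) t, \<theta> (kap \<kappa> \<tau> \<nu> t) \<omega>))"
  have f_int: "integrable P (f \<nu>)" and f_exp: "(\<integral>\<omega>. f \<nu> \<omega> \<partial>P) = (\<integral>\<omega>. F ((\<tau> ^^ \<nu>) t, \<omega>) \<partial>P)"
    if "\<nu> < q" for \<nu>
  proof -
    interpret Th: mpt P "\<theta> (kap \<kappa> \<tau> \<nu> t)" by (rule \<theta>mpt[OF kK])
    show "integrable P (f \<nu>)" unfolding f_def by (rule Th.int_T(1)[OF Fint[OF that]])
    show "(\<integral>\<omega>. f \<nu> \<omega> \<partial>P) = (\<integral>\<omega>. F ((\<tau> ^^ \<nu>) t, \<omega>) \<partial>P)" unfolding f_def by (rule Th.int_T(2)[OF Fint[OF that]])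
  qed
  define g where "g = (\<lambda>\<omega>. \<Sum>\<nu><q. f \<nu> \<omega>)"
  define G where "G = (\<lambda>\<omega>. \<Sum>\<nu><q. \<bar>f \<nu> \<omega>\<bar>)"
  have g_int: "integrable P g" unfolding g_def by (intro Bochner_Integration.integrable_sum f_int) simp
  have G_int: "integrable P G" unfolding G_def by (intro Bochner_Integration.integrable_sum integrable_abs f_int) simp
  define E where "E = real_cond_exp P (invariant_sigma P Tt)"
  have per_j: "(\<tau> ^^ (q * j)) t = t" for j
  proof (induction j)
    case 0 then show ?case by simp
  next
    case (Suc j)
    have "(\<tau> ^^ (q * Suc j)) t = (\<tau> ^^ q) ((\<tau> ^^ (q * j)) t)" by (simp add: funpow_add)
    then show ?case using Suc per by simp
  qed
  have tau_eq: "(\<tau> ^^ (q * j + \<nu>)) t = (\<tau> ^^ \<nu>) t" for j \<nu>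
  proof -
    have "(\<tau> ^^ (q * j + \<nu>)) t = (\<tau> ^^ \<nu>) ((\<tau> ^^ (q * j)) t)" by (simp add: funpow_add add.commute)
    then show ?thesis using per_j by simp
  qed
  have kap_q: "kap \<kappa> \<tau> (q + m) t = kap \<kappa> \<tau> m t + kap \<kappa> \<tau> q t" for m
    using kap_add[of \<kappa> \<tau> q m t] per by (simp add: add.commute)
  have theta_eq: "\<theta> (kap \<kappa> \<tau> (q * j + \<nu>) t) \<omega> = \<theta> (kap \<kappa> \<tau> \<nu> t) ((Tt ^^ j) \<omega>)" if "\<omega> \<in> space P" for j \<nu> \<omega>
    using that
  proof (induction j arbitrary: \<omega>)
    case 0 then show ?case by simp
  next
    case (Suc j)
    have "\<theta> (kap \<kappa> \<tau> (q * Suc j + \<nu>) t) \<omega> = \<theta> (kap \<kappa> \<tau> (q * j + \<nu>) t + kap \<kappa> \<tau> q t) \<omega>"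
      using kap_q[of "q * j + \<nu>"] by (simp add: add_ac)
    also have "\<dots> = \<theta> (kap \<kappa> \<tau> (q * j + \<nu>) t) (Tt \<omega>)"
      unfolding Tt_def using \<theta>_add[OF kK kK Suc.prems] by simp
    also have "\<dots> = \<theta> (kap \<kappa> \<tau> \<nu> t) ((Tt ^^ j) (Tt \<omega>))"
      using Suc.IH[of "Tt \<omega>"] measurable_space[OF TT.T_meas Suc.prems] by simp
    also have "(Tt ^^ j) (Tt \<omega>) = (Tt ^^ Suc j) \<omega>" by (simp add: funpow_Suc_right del: funpow.simps)
    finally show ?case .
  qed
  have modq: "n mod q < q" for n using q by simp
  define R where "R = (\<lambda>n \<omega>. \<Sum>\<nu><n mod q. f \<nu> ((Tt ^^ (n div q)) \<omega>))"
  have A_eq: "Ax n \<omega> = (real (n div q) / real n) * bavg Tt g (n div q) \<omega> + R n \<omega> / real n"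
    if \<omega>: "\<omega> \<in> space P" for n \<omega>
  proof -
    have "(\<Sum>i<n. F ((\<tau> ^^ i) t, \<theta> (kap \<kappa> \<tau> i t) \<omega>))
        = (\<Sum>j<n div q. \<Sum>\<nu><q. F ((\<tau> ^^ (q*j+\<nu>)) t, \<theta> (kap \<kappa> \<tau> (q*j+\<nu>) t) \<omega>))
          + (\<Sum>\<nu><n mod q. F ((\<tau> ^^ (q*(n div q)+\<nu>)) t, \<theta> (kap \<kappa> \<tau> (q*(n div q)+\<nu>) t) \<omega>))"
      by (rule sum_blocks_rem[OF q])
    also have "\<dots> = bsum Tt g (n div q) \<omega> + R n \<omega>"
      unfolding bsum_def g_def R_def f_def tau_eq theta_eq[OF \<omega>] ..
    finally show ?thesis unfolding Ax_def bsum_eq_mult by (simp add: add_divide_distrib)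
  qed
  have R_bound: "\<bar>R n \<omega>\<bar> \<le> G ((Tt ^^ (n div q)) \<omega>)" for n \<omega>
  proof -
    have "\<bar>R n \<omega>\<bar> \<le> (\<Sum>\<nu><n mod q. \<bar>f \<nu> ((Tt ^^ (n div q)) \<omega>)\<bar>)" unfolding R_def by (rule sum_abs)
    also have "\<dots> \<le> G ((Tt ^^ (n div q)) \<omega>)" unfolding G_def
      by (rule sum_mono2) (use q modq[of n] in auto)
    finally show ?thesis .
  qed
  have R_int: "integrable P (R n)" for n
    unfolding R_def
  proof (rule Bochner_Integration.integrable_sum)
    fix \<nu> assume "\<nu> \<in> {..<n mod q}"
    then have "\<nu> < q" using modq[of n] by auto
    from f_int[OF this] show "integrable P (\<lambda>x. f \<nu> ((Tt ^^ (n div q)) x))" by (rule TT.int_Tn(1))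
  qed
  have Ef_int: "integrable P (E (f \<nu>))" if "\<nu> < q" for \<nu> unfolding E_def by (rule S.real_cond_exp_int(1)[OF f_int[OF that]])
  have Lx_eq: "Lx = (\<lambda>\<omega>. (1 / real q) * (\<Sum>\<nu><q. E (f \<nu>) \<omega>))"
    unfolding Lx_def E_def f_def Tt_def ..
  have Lx_int: "integrable P Lx" unfolding Lx_eq by (intro integrable_mult_right Bochner_Integration.integrable_sum Ef_int) simp
  have Eg: "AE \<omega> in P. E g \<omega> = (\<Sum>\<nu><q. E (f \<nu>) \<omega>)"
    unfolding E_def g_def by (rule S.real_cond_exp_sum_nat) (rule f_int)
  have LEg: "AE \<omega> in P. Lx \<omega> = E g \<omega> / real q"
    using Eg by eventually_elim (simp add: Lx_eq)
  have B1: "AE \<omega> in P. (\<lambda>m. bavg Tt g m \<omega>) \<longlonglongrightarrow> E g \<omega>" unfolding E_def by (rule TT.birkhoff(1)[OF g_int])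
  have B2: "(\<lambda>m. \<integral>\<omega>. \<bar>bavg Tt g m \<omega> - E g \<omega>\<bar> \<partial>P) \<longlonglongrightarrow> 0" unfolding E_def by (rule TT.birkhoff(2)[OF g_int])
  have BG: "AE \<omega> in P. convergent (\<lambda>m. bavg Tt G m \<omega>)" by (rule TT.ae_convergent[OF G_int])
  have conv: "AE \<omega> in P. (\<lambda>n. Ax n \<omega>) \<longlonglongrightarrow> Lx \<omega>"
    using B1 LEg BG AE_space
  proof eventually_elim
    case (elim \<omega>)
    have "(\<lambda>n. (real (n div q) / real n) * bavg Tt g (n div q) \<omega> + R n \<omega> / real n) \<longlonglongrightarrow> E g \<omega> / real q"
      by (rule conv_block[OF q elim(1) last_term_conv[OF elim(3)] R_bound])
    then show ?case using A_eq[OF elim(4)] elim(2) by simp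
  qed
  define D where "D = (\<lambda>n. \<integral>\<omega>. \<bar>Ax n \<omega> - Lx \<omega>\<bar> \<partial>P)"
  have AL_int: "integrable P (\<lambda>\<omega>. \<bar>Ax n \<omega> - Lx \<omega>\<bar>)" for n
  proof -
    have "integrable P (\<lambda>\<omega>. \<bar>(real (n div q) / real n) * bavg Tt g (n div q) \<omega> + R n \<omega> / real n - Lx \<omega>\<bar>)"
      by (intro integrable_abs Bochner_Integration.integrable_diff Bochner_Integration.integrable_add
          integrable_mult_right TT.bavg_int g_int integrable_divide R_int Lx_int)
    moreover have "integrable P (\<lambda>\<omega>. \<bar>Ax n \<omega> - Lx \<omega>\<bar>) \<longleftrightarrow>
      integrable P (\<lambda>\<omega>. \<bar>(real (n div q) / real n) * bavg Tt g (n div q) \<omega> + R n \<omega> / real n - Lx \<omega>\<bar>)"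
      by (rule Bochner_Integration.integrable_cong) (auto simp: A_eq)
    ultimately show ?thesis by simp
  qed
  have Eg_int: "integrable P (E g)" unfolding E_def by (rule S.real_cond_exp_int(1)[OF g_int])
  have Dbound: "D n \<le> (real (n div q) / real n) * (\<integral>\<omega>. \<bar>bavg Tt g (n div q) \<omega> - E g \<omega>\<bar> \<partial>P)
       + \<bar>real (n div q) / real n - 1 / real q\<bar> * (\<integral>\<omega>. \<bar>E g \<omega>\<bar> \<partial>P) + (1 / real n) * (\<integral>\<omega>. G \<omega> \<partial>P)" for n
  proof -
    let ?r = "real (n div q) / real n"
    have i1: "integrable P (\<lambda>\<omega>. ?r * \<bar>bavg Tt g (n div q) \<omega> - E g \<omega>\<bar>)"
      by (intro integrable_mult_right integrable_abs Bochner_Integration.integrable_diff TT.bavg_int g_int Eg_int)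
    have i2: "integrable P (\<lambda>\<omega>. \<bar>?r - 1 / real q\<bar> * \<bar>E g \<omega>\<bar>)"
      by (intro integrable_mult_right integrable_abs Eg_int)
    have i3: "integrable P (\<lambda>\<omega>. (1 / real n) * G ((Tt ^^ (n div q)) \<omega>))"
      by (intro integrable_mult_right TT.int_Tn(1) G_int)
    have "D n \<le> (\<integral>\<omega>. ?r * \<bar>bavg Tt g (n div q) \<omega> - E g \<omega>\<bar> + \<bar>?r - 1 / real q\<bar> * \<bar>E g \<omega>\<bar>
                   + (1 / real n) * G ((Tt ^^ (n div q)) \<omega>) \<partial>P)"
      unfolding D_def
    proof (rule integral_mono_AE[OF AL_int])
      show "integrable P (\<lambda>\<omega>. ?r * \<bar>bavg Tt g (n div q) \<omega> - E g \<omega>\<bar> + \<bar>?r - 1 / real q\<bar> * \<bar>E g \<omega>\<bar>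
                   + (1 / real n) * G ((Tt ^^ (n div q)) \<omega>))" using i1 i2 i3 by auto
      show "AE \<omega> in P. \<bar>Ax n \<omega> - Lx \<omega>\<bar> \<le> ?r * \<bar>bavg Tt g (n div q) \<omega> - E g \<omega>\<bar> + \<bar>?r - 1 / real q\<bar> * \<bar>E g \<omega>\<bar>
                   + (1 / real n) * G ((Tt ^^ (n div q)) \<omega>)"
        using LEg AE_space
      proof eventually_elim
        case (elim \<omega>)
        have r0: "0 \<le> ?r" by simp
        have "Ax n \<omega> - Lx \<omega> = ?r * (bavg Tt g (n div q) \<omega> - E g \<omega>) + (?r - 1 / real q) * E g \<omega> + R n \<omega> / real n"
          using A_eq[OF elim(2)] elim(1) by (simp add: algebra_simps)
        have "\<bar>Ax n \<omega> - Lx \<omega>\<bar> \<le> \<bar>?r * (bavg Tt g (n div q) \<omega> - E g \<omega>)\<bar> + \<bar>(?r - 1 / real q) * E g \<omega>\<bar> + \<bar>R n \<omega> / real n\<bar>"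
          unfolding \<open>Ax n \<omega> - Lx \<omega> = _\<close> by (rule abs3)
        also have "\<bar>?r * (bavg Tt g (n div q) \<omega> - E g \<omega>)\<bar> = ?r * \<bar>bavg Tt g (n div q) \<omega> - E g \<omega>\<bar>"
          using r0 by (simp add: abs_mult)
        also have "\<bar>(?r - 1 / real q) * E g \<omega>\<bar> = \<bar>?r - 1 / real q\<bar> * \<bar>E g \<omega>\<bar>" by (simp add: abs_mult)
        also have "\<bar>R n \<omega> / real n\<bar> \<le> (1 / real n) * G ((Tt ^^ (n div q)) \<omega>)"
          using R_bound[of n \<omega>] by (simp add: abs_divide divide_right_mono)
        finally show ?case by simp
      qed
    qed
    also have "\<dots> = (\<integral>\<omega>. ?r * \<bar>bavg Tt g (n div q) \<omega> - E g \<omega>\<bar> \<partial>P) + (\<integral>\<omega>. \<bar>?r - 1 / real q\<bar> * \<bar>E g \<omega>\<bar> \<partial>P)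
                   + (\<integral>\<omega>. (1 / real n) * G ((Tt ^^ (n div q)) \<omega>) \<partial>P)"
      using i1 i2 i3 by simp
    also have "(\<integral>\<omega>. (1 / real n) * G ((Tt ^^ (n div q)) \<omega>) \<partial>P) = (1 / real n) * (\<integral>\<omega>. G \<omega> \<partial>P)"
      using TT.int_Tn(2)[OF G_int] by simp
    finally show ?thesis by simp
  qed
  have fl: "filterlim (\<lambda>n::nat. n div q) sequentially sequentially" by (rule filterlim_div_nat[OF q])
  define Bd where "Bd = (\<lambda>n. (real (n div q) / real n) * (\<integral>\<omega>. \<bar>bavg Tt g (n div q) \<omega> - E g \<omega>\<bar> \<partial>P)
       + \<bar>real (n div q) / real n - 1 / real q\<bar> * (\<integral>\<omega>. \<bar>E g \<omega>\<bar> \<partial>P) + (1 / real n) * (\<integral>\<omega>. G \<omega> \<partial>P))"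
  have "Bd \<longlonglongrightarrow> (1 / real q) * 0 + \<bar>1 / real q - 1 / real q\<bar> * (\<integral>\<omega>. \<bar>E g \<omega>\<bar> \<partial>P) + 0 * (\<integral>\<omega>. G \<omega> \<partial>P)"
    unfolding Bd_def
    by (intro tendsto_add tendsto_mult ratio_div_nat[OF q] filterlim_compose[OF B2 fl] tendsto_const
        tendsto_rabs tendsto_diff lim_const_over_n)
  then have Bconv: "Bd \<longlonglongrightarrow> 0" by simp
  have Dconv: "D \<longlonglongrightarrow> 0"
  proof (rule Lim_null_comparison[OF _ Bconv])
    show "\<forall>\<^sub>F n in sequentially. norm (D n) \<le> Bd n"
    proof (rule always_eventually, rule allI)
      fix n
      have "0 \<le> D n" unfolding D_def by simp
      then show "norm (D n) \<le> Bd n"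
        using Dbound[of n] unfolding Bd_def by simp
    qed
  qed
  have nn: "(\<integral>\<^sup>+ \<omega>. ennreal \<bar>Ax n \<omega> - Lx \<omega>\<bar> \<partial>P) = ennreal (D n)" for n
    unfolding D_def by (rule nn_integral_eq_integral[OF AL_int]) simp
  have L1: "(\<lambda>n. \<integral>\<^sup>+ \<omega>. ennreal \<bar>Ax n \<omega> - Lx \<omega>\<bar> \<partial>P) \<longlonglongrightarrow> 0"
    unfolding nn using tendsto_ennrealI[OF Dconv] by simp
  have erg: "AE \<omega> in P. Lx \<omega> = (1 / real q) * (\<Sum>\<nu><q. \<integral> \<omega>'. F ((\<tau> ^^ \<nu>) t, \<omega>') \<partial>P)"
    if e: "ergodic P (\<theta> (kap \<kappa> \<tau> q t))"
  proof -
    have e': "ergodic P Tt" using e unfolding Tt_def .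
    have "AE \<omega> in P. \<forall>\<nu>. \<nu> < q \<longrightarrow> E (f \<nu>) \<omega> = (\<integral> \<omega>'. F ((\<tau> ^^ \<nu>) t, \<omega>') \<partial>P)"
      unfolding AE_all_countable
    proof (intro allI)
      fix \<nu>
      show "AE \<omega> in P. \<nu> < q \<longrightarrow> E (f \<nu>) \<omega> = (\<integral> \<omega>'. F ((\<tau> ^^ \<nu>) t, \<omega>') \<partial>P)"
      proof (cases "\<nu> < q")
        case True
        show ?thesis using TT.cond_exp_ergodic[OF e' f_int[OF True]] f_exp[OF True]
          unfolding E_def by (auto elim!: AE_mp intro!: AE_I2)
      qed simp
    qed
    then show ?thesis by eventually_elim (simp add: Lx_eq)
  qed
  show ?thesis using conv L1 erg by blast
qed




theorem corollary3p3:
  fixes P :: "'w measure" and \<mu> :: "'m measure"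
    and K :: "(int ^ 'd) set"
    and \<theta> :: "int ^ 'd \<Rightarrow> 'w \<Rightarrow> 'w"
    and \<tau> :: "'m \<Rightarrow> 'm" and q :: nat
    and \<kappa> :: "'m \<Rightarrow> int ^ 'd"
    and F :: "'m \<times> 'w \<Rightarrow> real"
  defines "\<kappa>s \<equiv> (\<lambda>n t. \<Sum>i<n. \<kappa> ((\<tau> ^^ i) t))"
  defines "L \<equiv> (\<lambda>t \<omega>. (1 / real q) * (\<Sum>\<nu><q.
              real_cond_exp P (invariant_sigma P (\<theta> (\<kappa>s q t)))
                 (\<lambda>\<omega>'. F ((\<tau> ^^ \<nu>) t, \<theta> (\<kappa>s \<nu> t) \<omega>')) \<omega>))"
  defines "A \<equiv> (\<lambda>t n \<omega>. (1 / real n) * (\<Sum>i<n. F ((\<tau> ^^ i) t, \<theta> (\<kappa>s i t) \<omega>)))"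
  assumes K: "K = {k. \<forall>i. 0 \<le> k $ i} \<or> K = UNIV"
    and P: "prob_space P"
    and \<theta>_mp: "\<And>k. k \<in> K \<Longrightarrow> meas_preserving P (\<theta> k)"
    and \<theta>_0: "\<And>\<omega>. \<omega> \<in> space P \<Longrightarrow> \<theta> 0 \<omega> = \<omega>"
    and \<theta>_add: "\<And>k l \<omega>. k \<in> K \<Longrightarrow> l \<in> K \<Longrightarrow> \<omega> \<in> space P \<Longrightarrow>
                   \<theta> k (\<theta> l \<omega>) = \<theta> (k + l) \<omega>"
    and \<mu>: "prob_space \<mu>"
    and \<tau>_mp: "meas_preserving \<mu> \<tau>"
    and q: "q \<ge> 1"
    and \<tau>_per: "\<And>t. t \<in> space \<mu> \<Longrightarrow> (\<tau> ^^ q) t = t"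
    and \<kappa>_meas: "\<kappa> \<in> \<mu> \<rightarrow>\<^sub>M count_space UNIV"
    and \<kappa>_K: "\<And>t. t \<in> space \<mu> \<Longrightarrow> \<kappa> t \<in> K"
    and F: "integrable (\<mu> \<Otimes>\<^sub>M P) F"
  shows "(AE t in \<mu>. (AE \<omega> in P. (\<lambda>n. A t n \<omega>) \<longlonglongrightarrow> L t \<omega>)
                   \<and> (\<lambda>n. \<integral>\<^sup>+ \<omega>. ennreal \<bar>A t n \<omega> - L t \<omega>\<bar> \<partial>P) \<longlonglongrightarrow> 0)
       \<and> ((AE t in \<mu>. ergodic P (\<theta> (\<kappa>s q t))) \<longrightarrow>
          (AE t in \<mu>. AE \<omega> in P.
             L t \<omega> = (1 / real q) * (\<Sum>\<nu><q. \<integral> \<omega>'. F ((\<tau> ^^ \<nu>) t, \<omega>') \<partial>P)))"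
proof -
  interpret Mu: mpt \<mu> \<tau> by (rule mpt_of_mp[OF \<mu> \<tau>_mp])
  have K0: "0 \<in> K" using K by auto
  have Kadd: "k + l \<in> K" if "k \<in> K" "l \<in> K" for k l
    using K that by auto
  have \<kappa>s_eq: "\<kappa>s = kap \<kappa> \<tau>" unfolding \<kappa>s_def kap_def by (intro ext) simp
  define good where "good t \<longleftrightarrow> t \<in> space \<mu> \<and> (\<forall>\<nu><q. integrable P (\<lambda>\<omega>. F ((\<tau> ^^ \<nu>) t, \<omega>)))" for t
  have ae_good: "AE t in \<mu>. good t"
  proof -
    interpret PS: pair_sigma_finite \<mu> P
      unfolding pair_sigma_finite_def using prob_space_imp_sigma_finite[OF \<mu>] prob_space_imp_sigma_finite[OF P] by auto
    have a0: "AE t in \<mu>. integrable P (\<lambda>\<omega>. F (t, \<omega>))" by (rule PS.AE_integrable_fst'[OF F])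
    have "AE t in \<mu>. \<forall>\<nu>. \<nu> < q \<longrightarrow> integrable P (\<lambda>\<omega>. F ((\<tau> ^^ \<nu>) t, \<omega>))"
      unfolding AE_all_countable using AE_map_mp[OF Mu.Tn_meas Mu.Tn_distr a0] by auto
    with AE_space show ?thesis unfolding good_def by eventually_elim auto
  qed
  have main: "(AE \<omega> in P. (\<lambda>n. A t n \<omega>) \<longlonglongrightarrow> L t \<omega>)
       \<and> (\<lambda>n. \<integral>\<^sup>+ \<omega>. ennreal \<bar>A t n \<omega> - L t \<omega>\<bar> \<partial>P) \<longlonglongrightarrow> 0
       \<and> (ergodic P (\<theta> (\<kappa>s q t)) \<longrightarrow>
          (AE \<omega> in P. L t \<omega> = (1 / real q) * (\<Sum>\<nu><q. \<integral> \<omega>'. F ((\<tau> ^^ \<nu>) t, \<omega>') \<partial>P)))"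
    if gt: "good t" for t
  proof -
    have ts: "t \<in> space \<mu>" using gt unfolding good_def by auto
    have per: "(\<tau> ^^ q) t = t" by (rule \<tau>_per[OF ts])
    have \<kappa>K: "\<kappa> ((\<tau> ^^ i) t) \<in> K" for i using \<kappa>_K Mu.Tn_space[OF ts] by auto
    have Fint: "integrable P (\<lambda>\<omega>. F ((\<tau> ^^ \<nu>) t, \<omega>))" if "\<nu> < q" for \<nu> using gt that unfolding good_def by auto
    show ?thesis
      using per_t[where P=P and K=K and \<theta>=\<theta> and \<tau>=\<tau> and q=q and \<kappa>=\<kappa> and F=F and t=t, OF K0 Kadd P \<theta>_mp \<theta>_add q per \<kappa>K Fint]
      unfolding A_def L_def \<kappa>s_eq by simp
  qed
  show ?thesis
  proof
    show "AE t in \<mu>. (AE \<omega> in P. (\<lambda>n. A t n \<omega>) \<longlonglongrightarrow> L t \<omega>)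
                   \<and> (\<lambda>n. \<integral>\<^sup>+ \<omega>. ennreal \<bar>A t n \<omega> - L t \<omega>\<bar> \<partial>P) \<longlonglongrightarrow> 0"
      using ae_good by eventually_elim (use main in blast)
    show "(AE t in \<mu>. ergodic P (\<theta> (\<kappa>s q t))) \<longrightarrow>
          (AE t in \<mu>. AE \<omega> in P. L t \<omega> = (1 / real q) * (\<Sum>\<nu><q. \<integral> \<omega>'. F ((\<tau> ^^ \<nu>) t, \<omega>') \<partial>P))"
    proof
      assume "AE t in \<mu>. ergodic P (\<theta> (\<kappa>s q t))"
      with ae_good show "AE t in \<mu>. AE \<omega> in P. L t \<omega> = (1 / real q) * (\<Sum>\<nu><q. \<integral> \<omega>'. F ((\<tau> ^^ \<nu>) t, \<omega>') \<partial>P)"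
        by eventually_elim (use main in blast)
    qed
  qed
qed


end
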